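(* Let $m \in \mathbb N$ and $X \in M_m$. If there exists $Y \in M_m$ such that $X + Y \in \mathcal U_m$ and $X - Y \in \mathcal U_m$, then there exist $U, V \in \mathcal U_m$, $p, q, r \in \mathbb N \cup\{0\}$, $m_1,\ldots,m_r \in \mathbb N$ and $0 < s_r < \cdots < s_1 < 1$ with $p+q+\sum_{j=1}^r m_j = m$ and $$X = U\Big(I_p \oplus 0_q \oplus \bigoplus_{j=1}^r s_j I_{m_j}\Big)V.$$ Moreover, for any such $U,V,p,q,r,m_j,s_j$, if $Y \in M_m$ satisfies $X \pm Y \in \mathcal U_m$, then there exist $W \in \mathcal U_q$ and $H_j \in \mathcal H_{m_j}\cap\mathcal U_{m_j}$, $j=1,\ldots,r$, such that $$Y = U\Big(0_p \oplus W \oplus \bigoplus_{j=1}^r i\sqrt{1-s_j^2}\, H_j\Big)V.$$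
   Context: $M_m$ is the set of $m\times m$ complex matrices, $\mathcal U_m$ the unitary ones, $\mathcal H_n$ the $n\times n$ complex hermitian matrices; $\oplus$ denotes block-diagonal sum (zero-size blocks omitted). *)

theory Defs
  imports Complex_Main "Jordan_Normal_Form.Matrix"
begin

definition adjoint_mat :: "complex mat \<Rightarrow> complex mat" where
  "adjoint_mat A = mat (dim_col A) (dim_row A) (\<lambda>(i,j). cnj (A $$ (j,i)))"

definition unitary_mat :: "nat \<Rightarrow> complex mat set" where
  "unitary_mat m = {U. U \<in> carrier_mat m m \<and> adjoint_mat U * U = 1\<^sub>m m \<and> U * adjoint_mat U = 1\<^sub>m m}"

definition hermitian_mat :: "nat \<Rightarrow> complex mat set" where
  "hermitian_mat n = {H. H \<in> carrier_mat n n \<and> adjoint_mat H = H}"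

end

theory Submission
  imports Defs "Jordan_Normal_Form.Schur_Decomposition" "HOL-Combinatorics.Permutations"
begin

lemma massoc: "A \<in> carrier_mat a b \<Longrightarrow> B \<in> carrier_mat b c \<Longrightarrow> C \<in> carrier_mat c d \<Longrightarrow> A * (B * C) = A * B * C"
  by (rule assoc_mult_mat[symmetric])

lemma mult_entry:
  assumes "A \<in> carrier_mat n k" "B \<in> carrier_mat k m" "i < n" "j < m"
  shows "(A * B) $$ (i,j) = (\<Sum>l<k. A $$ (i,l) * B $$ (l,j))"
  using assms by (auto simp: scalar_prod_def lessThan_atLeast0 intro!: sum.cong)

lemma adj_carrier[simp]: "A \<in> carrier_mat n m \<Longrightarrow> adjoint_mat A \<in> carrier_mat m n"
  by (auto simp: adjoint_mat_def)

lemma adj_dim[simp]: "dim_row (adjoint_mat A) = dim_col A" "dim_col (adjoint_mat A) = dim_row A"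
  by (auto simp: adjoint_mat_def)

lemma adj_index[simp]: "i < dim_col A \<Longrightarrow> j < dim_row A \<Longrightarrow> adjoint_mat A $$ (i,j) = cnj (A $$ (j,i))"
  by (auto simp: adjoint_mat_def)

lemma adj_adj[simp]: "adjoint_mat (adjoint_mat A) = A"
  by (rule eq_matI, auto)

lemma adj_mult:
  assumes "A \<in> carrier_mat n k" "B \<in> carrier_mat k m"
  shows "adjoint_mat (A * B) = adjoint_mat B * adjoint_mat A"
proof (rule eq_matI)
  fix i j assume "i < dim_row (adjoint_mat B * adjoint_mat A)" "j < dim_col (adjoint_mat B * adjoint_mat A)"
  then have ij: "i < m" "j < n" using assms by auto
  have "adjoint_mat (A * B) $$ (i,j) = cnj ((A*B) $$ (j,i))" using assms ij by simp
  also have "\<dots> = (\<Sum>l<k. cnj (A $$ (j,l)) * cnj (B $$ (l,i)))"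
    using assms ij by (subst mult_entry[OF assms(1,2)]) (auto simp: cnj_sum)
  also have "\<dots> = (adjoint_mat B * adjoint_mat A) $$ (i,j)"
    using assms ij by (subst mult_entry[of _ m k _ n], auto simp: mult.commute)
  finally show "adjoint_mat (A * B) $$ (i,j) = (adjoint_mat B * adjoint_mat A) $$ (i,j)" .
qed (use assms in auto)

lemma adj_add: "A \<in> carrier_mat n m \<Longrightarrow> B \<in> carrier_mat n m \<Longrightarrow> adjoint_mat (A + B) = adjoint_mat A + adjoint_mat B"
  by (rule eq_matI, auto)

lemma adj_minus: "A \<in> carrier_mat n m \<Longrightarrow> B \<in> carrier_mat n m \<Longrightarrow> adjoint_mat (A - B) = adjoint_mat A - adjoint_mat B"
  by (rule eq_matI, auto)

lemma adj_smult: "adjoint_mat (c \<cdot>\<^sub>m A) = cnj c \<cdot>\<^sub>m adjoint_mat A"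
  by (rule eq_matI, auto)

lemma adj_one[simp]: "adjoint_mat (1\<^sub>m n) = 1\<^sub>m n"
  by (rule eq_matI, auto)

lemma adj_zero[simp]: "adjoint_mat (0\<^sub>m n m) = 0\<^sub>m m n"
  by (rule eq_matI, auto)

lemma unitaryI:
  assumes "U \<in> carrier_mat n n" "adjoint_mat U * U = 1\<^sub>m n"
  shows "U \<in> unitary_mat n"
  using assms mat_mult_left_right_inverse[of "adjoint_mat U" n U]
  unfolding unitary_mat_def by auto

lemma unitaryD:
  assumes "U \<in> unitary_mat n"
  shows "U \<in> carrier_mat n n" "adjoint_mat U * U = 1\<^sub>m n" "U * adjoint_mat U = 1\<^sub>m n"
  using assms unfolding unitary_mat_def by auto

lemma unitary_cancel_left:
  assumes U: "U \<in> unitary_mat n" and M: "M \<in> carrier_mat n k"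
  shows "adjoint_mat U * (U * M) = M" "U * (adjoint_mat U * M) = M"
proof -
  note u = unitaryD[OF U]
  have "adjoint_mat U * (U * M) = (adjoint_mat U * U) * M"
    using u M by (intro massoc[of _ n n]) auto
  then show "adjoint_mat U * (U * M) = M" using u M by simp
  have "U * (adjoint_mat U * M) = (U * adjoint_mat U) * M"
    using u M by (intro massoc[of _ n n]) auto
  then show "U * (adjoint_mat U * M) = M" using u M by simp
qed

lemma unitary_cancel_right:
  assumes U: "U \<in> unitary_mat n" and M: "M \<in> carrier_mat k n"
  shows "M * adjoint_mat U * U = M" "M * U * adjoint_mat U = M"
proof -
  note u = unitaryD[OF U]
  have "M * adjoint_mat U * U = M * (adjoint_mat U * U)"
    using u M by (intro assoc_mult_mat[of _ k n _ n _ n]) auto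
  then show "M * adjoint_mat U * U = M" using u M by simp
  have "M * U * adjoint_mat U = M * (U * adjoint_mat U)"
    using u M by (intro assoc_mult_mat[of _ k n _ n _ n]) auto
  then show "M * U * adjoint_mat U = M" using u M by simp
qed

lemma unitary_mult:
  assumes U: "U \<in> unitary_mat n" and V: "V \<in> unitary_mat n"
  shows "U * V \<in> unitary_mat n"
proof (rule unitaryI)
  note u = unitaryD[OF U] and v = unitaryD[OF V]
  show "U * V \<in> carrier_mat n n" using u v by auto
  have "adjoint_mat (U * V) * (U * V) = adjoint_mat V * (adjoint_mat U * (U * V))"
    using u v by (simp add: adj_mult[of _ n n _ n] del: assoc_mult_mat, intro assoc_mult_mat[of _ n n _ n _ n], auto)
  also have "\<dots> = 1\<^sub>m n" using u v unitary_cancel_left[OF U, of V n] by simp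
  finally show "adjoint_mat (U * V) * (U * V) = 1\<^sub>m n" .
qed

lemma unitary_adj:
  assumes U: "U \<in> unitary_mat n" shows "adjoint_mat U \<in> unitary_mat n"
  using unitaryD[OF U] unfolding unitary_mat_def by auto

lemma unitary_one: "1\<^sub>m n \<in> unitary_mat n"
  unfolding unitary_mat_def by auto

lemma unitary_cancel:
  assumes U: "U \<in> unitary_mat n" and V: "V \<in> unitary_mat n" and M: "M \<in> carrier_mat n n"
    and UMV: "U * M * V \<in> unitary_mat n"
  shows "M \<in> unitary_mat n"
proof -
  note u = unitaryD[OF U] and v = unitaryD[OF V]
  have "M = adjoint_mat U * (U * M * V) * adjoint_mat V"
  proof -
    have "adjoint_mat U * (U * M * V) * adjoint_mat V = adjoint_mat U * (U * (M * V * adjoint_mat V))"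
      using u v M by (simp add: assoc_mult_mat[of _ n n _ n _ n])
    also have "\<dots> = M" using u v M unitary_cancel_left[OF U, of M n] unitary_cancel_right[OF V, of M n] by simp
    finally show ?thesis by simp
  qed
  then show ?thesis using unitary_mult[OF unitary_mult[OF unitary_adj[OF U] UMV] unitary_adj[OF V]] by simp
qed

lemma cip_expand:
  assumes "w \<in> carrier_vec n" "u \<in> carrier_vec n"
  shows "w \<bullet>c u = (\<Sum>l<n. w $ l * cnj (u $ l))"
  using assms by (auto simp: scalar_prod_def lessThan_atLeast0 intro!: sum.cong)

lemma cip_self:
  assumes "w \<in> carrier_vec n"
  shows "w \<bullet>c w = complex_of_real (\<Sum>l<n. (cmod (w $ l))\<^sup>2)"
  unfolding cip_expand[OF assms assms] of_real_sum
  by (rule sum.cong, simp, subst complex_norm_square, simp)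

lemma orth_unitary:
  assumes ws: "set ws \<subseteq> carrier_vec n" and orth: "corthogonal ws" and len: "length ws = n"
  defines "nr \<equiv> \<lambda>w. sqrt (\<Sum>l<n. (cmod (w $ l))\<^sup>2)"
  defines "ws' \<equiv> map (\<lambda>w. (1 / complex_of_real (nr w)) \<cdot>\<^sub>v w) ws"
  shows "mat_of_cols n ws' \<in> unitary_mat n"
proof (rule unitaryI)
  let ?W = "mat_of_cols n ws'"
  show W: "?W \<in> carrier_mat n n" unfolding ws'_def using len by (metis length_map mat_of_cols_carrier(1))
  have wsi: "ws ! i \<in> carrier_vec n" if "i < n" for i using ws len that by auto
  have nz: "nr (ws ! i) > 0" if i: "i < n" for i
  proof -
    have "ws ! i \<bullet>c ws ! i \<noteq> 0" using corthogonalD[OF orth, of i i] i len by auto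
    then have "(\<Sum>l<n. (cmod (ws ! i $ l))\<^sup>2) \<noteq> 0" using cip_self[OF wsi[OF i]] by (metis of_real_0)
    moreover have "(\<Sum>l<n. (cmod (ws ! i $ l))\<^sup>2) \<ge> 0" by (intro sum_nonneg) auto
    ultimately show ?thesis unfolding nr_def by auto
  qed
  have Wij: "?W $$ (l, j) = (ws ! j $ l) / complex_of_real (nr (ws ! j))" if "l < n" "j < n" for l j
    using that len wsi[OF that(2)] by (simp add: ws'_def mat_of_cols_def)
  show "adjoint_mat ?W * ?W = 1\<^sub>m n"
  proof (rule eq_matI)
    fix i j assume "i < dim_row (1\<^sub>m n)" "j < dim_col (1\<^sub>m n)"
    then have i: "i < n" and j: "j < n" by auto
    have "(adjoint_mat ?W * ?W) $$ (i,j) = (\<Sum>l<n. cnj (?W $$ (l,i)) * ?W $$ (l,j))"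
      using W i j by (subst mult_entry[of _ n n _ n]) auto
    also have "\<dots> = (\<Sum>l<n. (ws ! j $ l) * cnj (ws ! i $ l)) / (complex_of_real (nr (ws ! i)) * complex_of_real (nr (ws ! j)))"
      using i j by (simp add: Wij sum_divide_distrib mult.commute)
    also have "(\<Sum>l<n. (ws ! j $ l) * cnj (ws ! i $ l)) = ws ! j \<bullet>c ws ! i"
      using cip_expand[OF wsi[OF j] wsi[OF i]] by simp
    also have "\<dots> / (complex_of_real (nr (ws ! i)) * complex_of_real (nr (ws ! j))) = 1\<^sub>m n $$ (i,j)"
    proof (cases "i = j")
      case True
      have "ws ! j \<bullet>c ws ! j = complex_of_real ((nr (ws ! j))\<^sup>2)"
        unfolding cip_self[OF wsi[OF j]] nr_def by (subst real_sqrt_pow2) (auto intro: sum_nonneg)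
      then show ?thesis using True i nz[OF j] by (simp add: power2_eq_square)
    next
      case False
      then have "ws ! j \<bullet>c ws ! i = 0" using corthogonalD[OF orth, of j i] i j len by auto
      then show ?thesis using False i j by simp
    qed
    finally show "(adjoint_mat ?W * ?W) $$ (i,j) = 1\<^sub>m n $$ (i,j)" .
  qed (use W in auto)
qed

lemma unitary_first_col:
  fixes v :: "complex vec"
  assumes v: "v \<in> carrier_vec n" and v0: "v \<noteq> 0\<^sub>v n"
  shows "\<exists>W c. W \<in> unitary_mat n \<and> col W 0 = c \<cdot>\<^sub>v v"
proof -
  interpret cof_vec_space n "TYPE(complex)" .
  define b where "b = basis_completion v"
  from basis_completion[OF v v0, folded b_def]
  have dist_b: "distinct b" and indep: "\<not> lin_dep (set b)" and b: "set b \<subseteq> carrier_vec n"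
    and hdb: "hd b = v" and len_b: "length b = n" by auto
  have n: "n \<noteq> 0"
  proof
    assume "n = 0"
    with v have "v = 0\<^sub>v n" by (intro eq_vecI) auto
    with v0 show False by simp
  qed
  from hdb len_b n obtain vs where bv: "b = v # vs" by (cases b, auto)
  define ws where "ws = gram_schmidt n b"
  from gram_schmidt_result[OF b dist_b indep ws_def]
  have ws: "set ws \<subseteq> carrier_vec n" "corthogonal ws" "length ws = n" by (auto simp: len_b)
  from gram_schmidt_hd[OF v, of vs, folded bv] have hdws: "hd ws = v" unfolding ws_def .
  define nr where "nr \<equiv> \<lambda>w::complex vec. sqrt (\<Sum>l<n. (cmod (w $ l))\<^sup>2)"
  define ws' where "ws' \<equiv> map (\<lambda>w. (1 / complex_of_real (nr w)) \<cdot>\<^sub>v w) ws"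
  have U: "mat_of_cols n ws' \<in> unitary_mat n"
    using orth_unitary[OF ws] unfolding ws'_def nr_def by simp
  have ws0: "ws ! 0 = v" using hdws ws(3) n by (metis hd_conv_nth list.size(3))
  have "col (mat_of_cols n ws') 0 = ws' ! 0"
    using ws n v ws0 by (intro col_mat_of_cols) (auto simp: ws'_def)
  also have "\<dots> = (1 / complex_of_real (nr v)) \<cdot>\<^sub>v v" using ws0 ws n by (simp add: ws'_def)
  finally show ?thesis using U by blast
qed

lemma unitary_schur:
  fixes A :: "complex mat"
  assumes "A \<in> carrier_mat n n"
  shows "\<exists>Q T. Q \<in> unitary_mat n \<and> T \<in> carrier_mat n n \<and> upper_triangular T \<and> A = Q * T * adjoint_mat Q"
  using assms
proof (induction n arbitrary: A)
  case 0
  then show ?case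
    by (intro exI[of _ "1\<^sub>m 0"] exI[of _ A]) (auto simp: unitary_one upper_triangular_def)
next
  case (Suc k A)
  let ?n = "Suc k"
  have A: "A \<in> carrier_mat ?n ?n" by fact
  from char_poly_factorized[OF A] obtain as where cp: "char_poly A = (\<Prod>a\<leftarrow>as. [:- a, 1:])"
    and las: "length as = ?n" by auto
  then obtain e as' where as: "as = e # as'" by (cases as) auto
  have "poly (char_poly A) e = 0" unfolding cp as by simp
  then have "eigenvalue A e" using eigenvalue_root_char_poly[OF A] by simp
  then obtain v where "eigenvector A v e" unfolding eigenvalue_def by auto
  then have v: "v \<in> carrier_vec ?n" and v0: "v \<noteq> 0\<^sub>v ?n" and ev: "A *\<^sub>v v = e \<cdot>\<^sub>v v"
    unfolding eigenvector_def using A by auto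
  from unitary_first_col[OF v v0] obtain W c where W: "W \<in> unitary_mat ?n" and Wc: "col W 0 = c \<cdot>\<^sub>v v"
    by auto
  note w = unitaryD[OF W]
  have AW0: "(A * W) $$ (l, 0) = e * W $$ (l, 0)" if l: "l < ?n" for l
  proof -
    have "(A * W) $$ (l, 0) = row A l \<bullet> col W 0" using A w l by simp
    also have "\<dots> = (A *\<^sub>v col W 0) $ l" using A l by simp
    also have "A *\<^sub>v col W 0 = e \<cdot>\<^sub>v col W 0" unfolding Wc using mult_mat_vec[OF A v] ev
      by (simp add: smult_smult_assoc mult.commute)
    also have "(e \<cdot>\<^sub>v col W 0) $ l = e * W $$ (l, 0)" using w l by simp
    finally show ?thesis .
  qed
  define A' where "A' = adjoint_mat W * A * W"
  have A': "A' \<in> carrier_mat ?n ?n" unfolding A'_def using A w by auto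
  have A'0: "A' $$ (i, 0) = (if i = 0 then e else 0)" if i: "i < ?n" for i
  proof -
    have eqA': "A' = adjoint_mat W * (A * W)" unfolding A'_def using A w by (intro assoc_mult_mat) auto
    have "A' $$ (i, 0) = (\<Sum>l<?n. cnj (W $$ (l, i)) * (A * W) $$ (l, 0))"
      unfolding eqA' using A w i by (subst mult_entry[of _ ?n ?n _ ?n]) auto
    also have "\<dots> = e * (\<Sum>l<?n. cnj (W $$ (l, i)) * W $$ (l, 0))"
      by (subst sum_distrib_left, rule sum.cong, simp, simp add: AW0)
    also have "(\<Sum>l<?n. cnj (W $$ (l, i)) * W $$ (l, 0)) = (adjoint_mat W * W) $$ (i, 0)"
      using w i by (subst mult_entry[of _ ?n ?n _ ?n]) auto
    also have "\<dots> = (if i = 0 then 1 else 0)" using w i by simp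
    finally show ?thesis by simp
  qed
  obtain A1 A2 A0 A3 where sp: "split_block A' 1 1 = (A1, A2, A0, A3)"
    by (cases "split_block A' 1 1") auto
  have dims: "dim_row A' = 1 + k" "dim_col A' = 1 + k" using A' by auto
  note spl = split_block[OF sp dims]
  have A0: "A0 = 0\<^sub>m k 1"
    using sp A'0 A' unfolding split_block_def Let_def by (auto intro!: eq_matI)
  from Suc.IH[OF spl(4)] obtain Q3 T3 where Q3: "Q3 \<in> unitary_mat k" and T3: "T3 \<in> carrier_mat k k"
    and ut3: "upper_triangular T3" and A3: "A3 = Q3 * T3 * adjoint_mat Q3" by auto
  note q3 = unitaryD[OF Q3]
  define Qb where "Qb = four_block_mat (1\<^sub>m 1) (0\<^sub>m 1 k) (0\<^sub>m k 1) Q3"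
  define T where "T = four_block_mat A1 (A2 * Q3) (0\<^sub>m k 1) T3"
  have adjQb: "adjoint_mat Qb = four_block_mat (1\<^sub>m 1) (0\<^sub>m 1 k) (0\<^sub>m k 1) (adjoint_mat Q3)"
    unfolding Qb_def using q3 by (intro eq_matI) auto
  have Qbc: "Qb \<in> carrier_mat ?n ?n" unfolding Qb_def using q3 by auto
  have Qb: "Qb \<in> unitary_mat ?n"
  proof (rule unitaryI[OF Qbc])
    have "adjoint_mat Qb * Qb = four_block_mat (1\<^sub>m 1) (0\<^sub>m 1 k) (0\<^sub>m k 1) (1\<^sub>m k)"
      unfolding adjQb unfolding Qb_def using q3
      by (subst mult_four_block_mat[where ?nr1.0=1 and ?n1.0=1 and ?n2.0=k and ?nr2.0=k and ?nc1.0=1 and ?nc2.0=k]) auto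
    then show "adjoint_mat Qb * Qb = 1\<^sub>m ?n" by simp
  qed
  have Tc: "T \<in> carrier_mat ?n ?n" unfolding T_def using spl T3 by auto
  have utT: "upper_triangular T" unfolding T_def
    by (rule upper_triangular_four_block[OF spl(1) T3 _ ut3]) (use spl(1) in auto)
  have "Qb * T * adjoint_mat Qb = A'"
  proof -
    have "Qb * T = four_block_mat A1 (A2 * Q3) (0\<^sub>m k 1) (Q3 * T3)"
      unfolding Qb_def T_def using q3 spl T3
      by (subst mult_four_block_mat[where ?nr1.0=1 and ?n1.0=1 and ?n2.0=k and ?nr2.0=k and ?nc1.0=1 and ?nc2.0=k]) auto
    also have "\<dots> * adjoint_mat Qb = four_block_mat A1 (A2 * Q3 * adjoint_mat Q3) (0\<^sub>m k 1) (Q3 * T3 * adjoint_mat Q3)"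
      unfolding adjQb using q3 spl T3
      by (subst mult_four_block_mat[where ?nr1.0=1 and ?n1.0=1 and ?n2.0=k and ?nr2.0=k and ?nc1.0=1 and ?nc2.0=k]) auto
    also have "A2 * Q3 * adjoint_mat Q3 = A2" using unitary_cancel_right[OF Q3 spl(2)] by simp
    finally show ?thesis using spl(5) A0 A3 by simp
  qed
  have "W * Qb * T * adjoint_mat (W * Qb) = W * (Qb * T * adjoint_mat Qb) * adjoint_mat W"
    using w Qbc Tc by (simp add: adj_mult[of _ ?n ?n _ ?n] mult_carrier_mat[of _ ?n ?n] assoc_mult_mat[of _ ?n ?n _ ?n _ ?n])
  also have "\<dots> = W * (adjoint_mat W * (A * (W * adjoint_mat W)))"
    unfolding \<open>Qb * T * adjoint_mat Qb = A'\<close> A'_def using w A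
    by (simp add: mult_carrier_mat[of _ ?n ?n] assoc_mult_mat[of _ ?n ?n _ ?n _ ?n])
  also have "\<dots> = A" using w A unitary_cancel_left(2)[OF W A] by simp
  finally show ?case using unitary_mult[OF W Qb] Tc utT by metis
qed

lemma sum_single_nz:
  fixes f :: "nat \<Rightarrow> 'a::comm_monoid_add"
  assumes "i < n" "\<And>l. l < n \<Longrightarrow> l \<noteq> i \<Longrightarrow> f l = 0"
  shows "(\<Sum>l<n. f l) = f i"
  using assms by (subst sum.remove[of _ i]) (auto intro!: sum.neutral)

lemma unitary_triangular_diag:
  assumes U: "T \<in> unitary_mat n" and ut: "upper_triangular T"
  shows "\<And>i j. i < n \<Longrightarrow> j < n \<Longrightarrow> i \<noteq> j \<Longrightarrow> T $$ (i,j) = 0"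
    and "\<And>i. i < n \<Longrightarrow> cmod (T $$ (i,i)) = 1"
proof -
  note u = unitaryD[OF U]
  have low: "T $$ (l, i) = 0" if "i < l" "l < n" for i l using ut u that by auto
  have main: "i < n \<longrightarrow> (\<forall>j<n. j \<noteq> i \<longrightarrow> T $$ (i,j) = 0) \<and> cmod (T $$ (i,i)) = 1" for i
  proof (induction i rule: less_induct)
    case (less i)
    show ?case
    proof
      assume i: "i < n"
      have "1 = (adjoint_mat T * T) $$ (i,i)" using u i by simp
      also have "\<dots> = (\<Sum>l<n. cnj (T $$ (l,i)) * T $$ (l,i))"
        using u i by (subst mult_entry[of _ n n _ n]) auto
      also have "\<dots> = cnj (T $$ (i,i)) * T $$ (i,i)"
      proof (rule sum_single_nz[OF i])
        fix l assume l: "l < n" "l \<noteq> i"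
        show "cnj (T $$ (l,i)) * T $$ (l,i) = 0"
        proof (cases "l < i")
          case True
          then show ?thesis using less.IH[of l] l i by auto
        next
          case False
          then show ?thesis using low[of i l] l by auto
        qed
      qed
      also have "\<dots> = complex_of_real ((cmod (T $$ (i,i)))\<^sup>2)"
        by (subst complex_norm_square) (simp add: mult.commute)
      finally have d1: "(cmod (T $$ (i,i)))\<^sup>2 = 1" by (metis of_real_eq_1_iff)
      have "1 = (T * adjoint_mat T) $$ (i,i)" using u i by simp
      also have "\<dots> = (\<Sum>l<n. T $$ (i,l) * cnj (T $$ (i,l)))"
        using u i by (subst mult_entry[of _ n n _ n]) auto
      also have "\<dots> = complex_of_real (\<Sum>l<n. (cmod (T $$ (i,l)))\<^sup>2)"
        unfolding of_real_sum by (rule sum.cong, simp, subst complex_norm_square, simp)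
      finally have s1: "(\<Sum>l<n. (cmod (T $$ (i,l)))\<^sup>2) = 1" by (metis of_real_eq_1_iff)
      have "(\<Sum>l<n. (cmod (T $$ (i,l)))\<^sup>2) = (cmod (T $$ (i,i)))\<^sup>2 + (\<Sum>l\<in>{..<n}-{i}. (cmod (T $$ (i,l)))\<^sup>2)"
        using i by (subst sum.remove[of _ i]) auto
      then have "(\<Sum>l\<in>{..<n}-{i}. (cmod (T $$ (i,l)))\<^sup>2) = 0" using s1 d1 by simp
      then have "\<forall>l\<in>{..<n}-{i}. (cmod (T $$ (i,l)))\<^sup>2 = 0"
        by (subst sum_nonneg_eq_0_iff[symmetric]) auto
      then have "\<forall>j<n. j \<noteq> i \<longrightarrow> T $$ (i,j) = 0" by auto
      moreover have "cmod (T $$ (i,i)) = 1" using d1 norm_ge_zero[of "T $$ (i,i)"] by (auto simp add: power2_eq_1_iff)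
      ultimately show "(\<forall>j<n. j \<noteq> i \<longrightarrow> T $$ (i,j) = 0) \<and> cmod (T $$ (i,i)) = 1" by blast
    qed
  qed
  show "\<And>i j. i < n \<Longrightarrow> j < n \<Longrightarrow> i \<noteq> j \<Longrightarrow> T $$ (i,j) = 0" using main by metis
  show "\<And>i. i < n \<Longrightarrow> cmod (T $$ (i,i)) = 1" using main by metis
qed

definition diagm :: "nat \<Rightarrow> (nat \<Rightarrow> complex) \<Rightarrow> complex mat" where
  "diagm n f = mat n n (\<lambda>(i,j). if i = j then f i else 0)"

lemma diagm_carrier[simp]: "diagm n f \<in> carrier_mat n n"
  and diagm_dim[simp]: "dim_row (diagm n f) = n" "dim_col (diagm n f) = n"
  and diagm_index[simp]: "i < n \<Longrightarrow> j < n \<Longrightarrow> diagm n f $$ (i,j) = (if i = j then f i else 0)"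
  by (auto simp: diagm_def)

lemma diagm_mult_left:
  assumes "M \<in> carrier_mat n k" "i < n" "j < k"
  shows "(diagm n f * M) $$ (i,j) = f i * M $$ (i,j)"
proof -
  have "(diagm n f * M) $$ (i,j) = (\<Sum>l<n. diagm n f $$ (i,l) * M $$ (l,j))"
    using assms by (intro mult_entry) auto
  also have "\<dots> = diagm n f $$ (i,i) * M $$ (i,j)"
    using assms by (intro sum_single_nz) auto
  finally show ?thesis using assms by simp
qed

lemma diagm_mult_right:
  assumes "M \<in> carrier_mat k n" "i < k" "j < n"
  shows "(M * diagm n f) $$ (i,j) = M $$ (i,j) * f j"
proof -
  have "(M * diagm n f) $$ (i,j) = (\<Sum>l<n. M $$ (i,l) * diagm n f $$ (l,j))"
    using assms by (intro mult_entry) auto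
  also have "\<dots> = M $$ (i,j) * diagm n f $$ (j,j)"
    using assms by (intro sum_single_nz) auto
  finally show ?thesis using assms by simp
qed

lemma diagm_mult: "diagm n f * diagm n g = diagm n (\<lambda>k. f k * g k)"
proof (rule eq_matI)
  fix i j assume "i < dim_row (diagm n (\<lambda>k. f k * g k))" "j < dim_col (diagm n (\<lambda>k. f k * g k))"
  then have ij: "i < n" "j < n" by auto
  show "(diagm n f * diagm n g) $$ (i,j) = diagm n (\<lambda>k. f k * g k) $$ (i,j)"
    using diagm_mult_left[of "diagm n g" n n i j f] ij by simp
qed auto

lemma adj_diagm: "adjoint_mat (diagm n f) = diagm n (\<lambda>k. cnj (f k))"
  by (rule eq_matI) auto

lemma diagm_unitary: "(\<And>k. k < n \<Longrightarrow> cmod (f k) = 1) \<Longrightarrow> diagm n f \<in> unitary_mat n"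
proof (rule unitaryI)
  assume f: "\<And>k. k < n \<Longrightarrow> cmod (f k) = 1"
  have "cnj (f k) * f k = 1" if "k < n" for k
    using complex_norm_square[of "f k"] f[OF that] by (simp add: mult.commute)
  then show "adjoint_mat (diagm n f) * diagm n f = 1\<^sub>m n"
    by (auto simp: adj_diagm diagm_mult intro!: eq_matI)
qed simp

lemma smult_cancel:
  assumes "(c::complex) \<noteq> 0" "c \<cdot>\<^sub>m A = c \<cdot>\<^sub>m B"
  shows "A = B"
proof (rule eq_matI)
  have d: "dim_row A = dim_row B" "dim_col A = dim_col B"
    using arg_cong[OF assms(2), of dim_row] arg_cong[OF assms(2), of dim_col] by auto
  then show "dim_row A = dim_row B" "dim_col A = dim_col B" by auto
  fix i j assume "i < dim_row B" "j < dim_col B"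
  then have "(c \<cdot>\<^sub>m A) $$ (i,j) = (c \<cdot>\<^sub>m B) $$ (i,j)" using assms by simp
  then show "A $$ (i,j) = B $$ (i,j)" using assms(1) d \<open>i < dim_row B\<close> \<open>j < dim_col B\<close> by simp
qed

lemma contraction_svd:
  assumes X: "X \<in> carrier_mat m m" and Y: "Y \<in> carrier_mat m m"
    and A: "X + Y \<in> unitary_mat m" and B: "X - Y \<in> unitary_mat m"
  shows "\<exists>U0 V0 \<sigma>. U0 \<in> unitary_mat m \<and> V0 \<in> unitary_mat m \<and> (\<forall>k<m. 0 \<le> \<sigma> k \<and> \<sigma> k \<le> 1)
     \<and> X = U0 * diagm m (\<lambda>k. complex_of_real (\<sigma> k)) * V0"
proof -
  define A where "A = X + Y"
  define B where "B = X - Y"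
  have Au: "A \<in> unitary_mat m" and Bu: "B \<in> unitary_mat m" using assms A_def B_def by auto
  note a = unitaryD[OF Au] and b = unitaryD[OF Bu]
  define C where "C = adjoint_mat A * B"
  have Cu: "C \<in> unitary_mat m" unfolding C_def by (rule unitary_mult[OF unitary_adj[OF Au] Bu])
  note c = unitaryD[OF Cu]
  from unitary_schur[OF c(1)] obtain Q T where Qu: "Q \<in> unitary_mat m" and Tc: "T \<in> carrier_mat m m"
    and ut: "upper_triangular T" and CQ: "C = Q * T * adjoint_mat Q" by auto
  note q = unitaryD[OF Qu]
  have TC: "T = adjoint_mat Q * C * Q"
  proof -
    have "adjoint_mat Q * C * Q = adjoint_mat Q * (Q * (T * (adjoint_mat Q * Q)))"
      unfolding CQ using q Tc by (simp add: mult_carrier_mat[of _ m m] assoc_mult_mat[of _ m m _ m _ m])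
    also have "\<dots> = T" using q Tc unitary_cancel_left(1)[OF Qu Tc] by simp
    finally show ?thesis by simp
  qed
  have Tu: "T \<in> unitary_mat m" unfolding TC
    by (rule unitary_mult[OF unitary_mult[OF unitary_adj[OF Qu] Cu] Qu])
  note offd = unitary_triangular_diag(1)[OF Tu ut] and dg = unitary_triangular_diag(2)[OF Tu ut]
  define u where "u = (\<lambda>k. 1 + T $$ (k,k))"
  define \<sigma> where "\<sigma> = (\<lambda>k. cmod (u k) / 2)"
  define \<phi> where "\<phi> = (\<lambda>k. if u k = 0 then 1 else u k / complex_of_real (cmod (u k)))"
  have \<sigma>b: "\<forall>k<m. 0 \<le> \<sigma> k \<and> \<sigma> k \<le> 1"
  proof (intro allI impI conjI)
    fix k assume k: "k < m"
    show "0 \<le> \<sigma> k" unfolding \<sigma>_def by simp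
    have "cmod (u k) \<le> cmod 1 + cmod (T $$ (k,k))" unfolding u_def by (rule norm_triangle_ineq)
    then show "\<sigma> k \<le> 1" unfolding \<sigma>_def using dg[OF k] by simp
  qed
  have \<phi>u: "diagm m \<phi> \<in> unitary_mat m"
    by (rule diagm_unitary) (auto simp: \<phi>_def norm_divide)
  have 1: "1\<^sub>m m + T = 2 \<cdot>\<^sub>m (diagm m \<phi> * diagm m (\<lambda>k. complex_of_real (\<sigma> k)))"
    unfolding diagm_mult
  proof (rule eq_matI)
    fix i j assume "i < dim_row (2 \<cdot>\<^sub>m diagm m (\<lambda>k. \<phi> k * complex_of_real (\<sigma> k)))"
      "j < dim_col (2 \<cdot>\<^sub>m diagm m (\<lambda>k. \<phi> k * complex_of_real (\<sigma> k)))"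
    then have i: "i < m" and j: "j < m" by auto
    show "(1\<^sub>m m + T) $$ (i,j) = (2 \<cdot>\<^sub>m diagm m (\<lambda>k. \<phi> k * complex_of_real (\<sigma> k))) $$ (i,j)"
    proof (cases "i = j")
      case True
      have "u i = 2 * (\<phi> i * complex_of_real (\<sigma> i))"
        unfolding \<phi>_def \<sigma>_def by (auto simp: of_real_divide)
      then show ?thesis using True i Tc unfolding u_def by simp
    next
      case False
      then show ?thesis using offd[OF i j] i j Tc by simp
    qed
  qed (use Tc in auto)
  have AB: "A + B = 2 \<cdot>\<^sub>m X" unfolding A_def B_def using X Y by (intro eq_matI) auto
  have AC: "A * C = B" unfolding C_def using unitary_cancel_left(2)[OF Au b(1)] .
  have "A + B = A * (1\<^sub>m m + C)" using a c by (simp add: mult_add_distrib_mat[of _ m m _ m] AC)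
  also have "1\<^sub>m m + C = Q * (1\<^sub>m m + T) * adjoint_mat Q"
    using q Tc unfolding CQ
    by (simp add: mult_add_distrib_mat[of _ m m _ m] add_mult_distrib_mat[of _ m m _ _ m])
  finally have "2 \<cdot>\<^sub>m X = A * (Q * (2 \<cdot>\<^sub>m (diagm m \<phi> * diagm m (\<lambda>k. complex_of_real (\<sigma> k)))) * adjoint_mat Q)"
    unfolding AB 1 .
  also have "\<dots> = 2 \<cdot>\<^sub>m (A * Q * diagm m \<phi> * diagm m (\<lambda>k. complex_of_real (\<sigma> k)) * adjoint_mat Q)"
    using a q by (simp add: mult_smult_distrib[of _ m m _ m] mult_smult_assoc_mat[of _ m m _ m]
       mult_carrier_mat[of _ m m] assoc_mult_mat[of _ m m _ m _ m])
  finally have "X = A * Q * diagm m \<phi> * diagm m (\<lambda>k. complex_of_real (\<sigma> k)) * adjoint_mat Q"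
    by (rule smult_cancel[rotated]) simp
  then show ?thesis
    using \<sigma>b unitary_mult[OF unitary_mult[OF Au Qu] \<phi>u] unitary_adj[OF Qu] by blast
qed

fun blk :: "nat list \<Rightarrow> nat \<Rightarrow> nat" where
  "blk [] i = 0"
| "blk (n # ns) i = (if i < n then 0 else Suc (blk ns (i - n)))"

definition off :: "nat list \<Rightarrow> nat \<Rightarrow> nat" where
  "off ns b = sum_list (take b ns)"

lemma off_0[simp]: "off ns 0 = 0" and off_Cons_Suc[simp]: "off (n # ns) (Suc b) = n + off ns b"
  by (auto simp: off_def)

lemma blk_lt: "i < sum_list ns \<Longrightarrow> blk ns i < length ns"
  by (induction ns arbitrary: i) auto

lemma blk_range: "i < sum_list ns \<Longrightarrow> off ns (blk ns i) \<le> i \<and> i < off ns (blk ns i) + ns ! (blk ns i)"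
proof (induction ns arbitrary: i)
  case (Cons n ns)
  show ?case
  proof (cases "i < n")
    case True then show ?thesis by simp
  next
    case False
    with Cons.prems have "i - n < sum_list ns" by simp
    from Cons.IH[OF this] False show ?thesis by auto
  qed
qed auto

lemma blk_eq: "b < length ns \<Longrightarrow> t < ns ! b \<Longrightarrow> blk ns (off ns b + t) = b"
proof (induction ns arbitrary: b)
  case (Cons n ns)
  then show ?case by (cases b) auto
qed auto

lemma off_bound: "b < length ns \<Longrightarrow> off ns b + ns ! b \<le> sum_list ns"
proof (induction ns arbitrary: b)
  case (Cons n ns)
  then show ?case by (cases b) auto
qed auto

lemma blk_iff:
  assumes "i < sum_list ns" "b < length ns"
  shows "blk ns i = b \<longleftrightarrow> off ns b \<le> i \<and> i < off ns b + ns ! b"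
proof
  assume "blk ns i = b" then show "off ns b \<le> i \<and> i < off ns b + ns ! b" using blk_range[OF assms(1)] by auto
next
  assume h: "off ns b \<le> i \<and> i < off ns b + ns ! b"
  have "blk ns (off ns b + (i - off ns b)) = b" using blk_eq[OF assms(2), of "i - off ns b"] h by auto
  then show "blk ns i = b" using h by simp
qed

lemma dbm_dims:
  "dim_row (diag_block_mat As) = sum_list (map dim_row As)"
  "dim_col (diag_block_mat As) = sum_list (map dim_col As)"
  by (rule dim_diag_block_mat(1), rule dim_diag_block_mat(2))

lemma dbm_index:
  assumes sq: "\<forall>A\<in>set As. dim_col A = dim_row A"
    and i: "i < sum_list (map dim_row As)" and j: "j < sum_list (map dim_row As)"
  shows "diag_block_mat As $$ (i,j) =
    (let ns = map dim_row As; b = blk ns i in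
      if b = blk ns j then As ! b $$ (i - off ns b, j - off ns b) else 0)"
  using sq i j
proof (induction As arbitrary: i j)
  case Nil
  then show ?case by simp
next
  case (Cons A As)
  let ?B = "diag_block_mat As"
  let ?ns = "map dim_row As"
  have sqA: "dim_col A = dim_row A" and sqs: "\<forall>A\<in>set As. dim_col A = dim_row A" using Cons.prems by auto
  have dB: "dim_row ?B = sum_list ?ns" "dim_col ?B = sum_list ?ns"
    using dbm_dims[of As] sqs by (auto intro!: arg_cong[of _ _ sum_list])
  have e: "diag_block_mat (A # As) $$ (i,j) =
     (if i < dim_row A then if j < dim_col A then A $$ (i,j) else 0
      else if j < dim_col A then 0 else ?B $$ (i - dim_row A, j - dim_col A))"
    using Cons.prems dB sqA by (simp add: Let_def)
  show ?case
  proof (cases "i < dim_row A")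
    case True
    then show ?thesis using e sqA by (cases "j < dim_row A") (auto simp: Let_def)
  next
    case False
    note iA = this
    show ?thesis
    proof (cases "j < dim_row A")
      case True
      then show ?thesis using e sqA iA by (auto simp: Let_def)
    next
      case False
      have i': "i - dim_row A < sum_list ?ns" "j - dim_row A < sum_list ?ns" using Cons.prems iA False by auto
      have "?B $$ (i - dim_row A, j - dim_row A) = (let b = blk ?ns (i - dim_row A) in
            if b = blk ?ns (j - dim_row A) then As ! b $$ (i - dim_row A - off ?ns b, j - dim_row A - off ?ns b) else 0)"
        using Cons.IH[OF sqs i'] by (simp add: Let_def)
      then show ?thesis using e sqA iA False by (auto simp: Let_def diff_diff_add)
    qed
  qed
qed

lemma map_dim_row_blocks: "map dim_row (map (\<lambda>b. f b \<cdot>\<^sub>m 1\<^sub>m (ns ! b)) [0..<length ns]) = ns"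
  by (rule nth_equalityI) auto

lemma dbm_scalar:
  fixes vs :: "complex list"
  assumes len: "length vs = length ns"
  shows "diag_block_mat (map (\<lambda>b. vs ! b \<cdot>\<^sub>m 1\<^sub>m (ns ! b)) [0..<length ns]) = diagm (sum_list ns) (\<lambda>i. vs ! blk ns i)"
    (is "diag_block_mat ?L = _")
proof -
  have mr: "map dim_row ?L = ns" by (rule map_dim_row_blocks)
  have mc: "map dim_col ?L = ns" by (rule nth_equalityI) auto
  have sq: "\<forall>A\<in>set ?L. dim_col A = dim_row A" by auto
  show ?thesis
  proof (rule eq_matI)
    fix i j assume "i < dim_row (diagm (sum_list ns) (\<lambda>i. vs ! blk ns i))" "j < dim_col (diagm (sum_list ns) (\<lambda>i. vs ! blk ns i))"
    then have i: "i < sum_list ns" and j: "j < sum_list ns" by auto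
    have e: "diag_block_mat ?L $$ (i,j) = (let b = blk ns i in
      if b = blk ns j then ?L ! b $$ (i - off ns b, j - off ns b) else 0)"
      using dbm_index[OF sq, unfolded mr, OF i j] by simp
    note ri = blk_range[OF i] and rj = blk_range[OF j] and bi = blk_lt[OF i]
    show "diag_block_mat ?L $$ (i,j) = diagm (sum_list ns) (\<lambda>i. vs ! blk ns i) $$ (i,j)"
    proof (cases "blk ns i = blk ns j")
      case True
      have "i - off ns (blk ns i) < ns ! blk ns i" "j - off ns (blk ns i) < ns ! blk ns i"
        using ri rj True by auto
      moreover have "(i - off ns (blk ns i) = j - off ns (blk ns i)) = (i = j)" using ri rj True by auto
      ultimately show ?thesis using e True i j bi by (simp add: Let_def)
    next
      case False
      then have "i \<noteq> j" by auto
      then show ?thesis using e False i j by (simp add: Let_def)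
    qed
  next
    show "dim_row (diag_block_mat ?L) = dim_row (diagm (sum_list ns) (\<lambda>i. vs ! blk ns i))"
      using dbm_dims(1)[of ?L] mr by simp
    show "dim_col (diag_block_mat ?L) = dim_col (diagm (sum_list ns) (\<lambda>i. vs ! blk ns i))"
      using dbm_dims(2)[of ?L] mc by simp
  qed
qed

definition blockof :: "complex mat \<Rightarrow> nat list \<Rightarrow> nat \<Rightarrow> complex mat" where
  "blockof Z ns b = mat (ns ! b) (ns ! b) (\<lambda>(i,j). Z $$ (off ns b + i, off ns b + j))"

lemma dbm_blocks:
  assumes Z: "Z \<in> carrier_mat (sum_list ns) (sum_list ns)"
    and bd: "\<And>i j. i < sum_list ns \<Longrightarrow> j < sum_list ns \<Longrightarrow> blk ns i \<noteq> blk ns j \<Longrightarrow> Z $$ (i,j) = 0"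
  shows "Z = diag_block_mat (map (blockof Z ns) [0..<length ns])" (is "_ = diag_block_mat ?L")
proof -
  have mr: "map dim_row ?L = ns" by (rule nth_equalityI) (auto simp: blockof_def)
  have mc: "map dim_col ?L = ns" by (rule nth_equalityI) (auto simp: blockof_def)
  have sq: "\<forall>A\<in>set ?L. dim_col A = dim_row A" by (auto simp: blockof_def)
  show ?thesis
  proof (rule eq_matI)
    show "dim_row Z = dim_row (diag_block_mat ?L)" using dbm_dims(1)[of ?L] mr Z by simp
    show "dim_col Z = dim_col (diag_block_mat ?L)" using dbm_dims(2)[of ?L] mc Z by simp
    fix i j assume "i < dim_row (diag_block_mat ?L)" "j < dim_col (diag_block_mat ?L)"
    then have i: "i < sum_list ns" and j: "j < sum_list ns" using dbm_dims[of ?L] mr mc by auto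
    have e: "diag_block_mat ?L $$ (i,j) = (let b = blk ns i in
      if b = blk ns j then ?L ! b $$ (i - off ns b, j - off ns b) else 0)"
      using dbm_index[OF sq, unfolded mr, OF i j] by simp
    note ri = blk_range[OF i] and rj = blk_range[OF j] and bi = blk_lt[OF i]
    show "Z $$ (i,j) = diag_block_mat ?L $$ (i,j)"
    proof (cases "blk ns i = blk ns j")
      case True
      have "i - off ns (blk ns i) < ns ! blk ns i" "j - off ns (blk ns i) < ns ! blk ns i"
        using ri rj True by auto
      then show ?thesis using e True i j bi ri rj by (simp add: Let_def blockof_def)
    next
      case False
      then show ?thesis using e bd[OF i j] by (simp add: Let_def)
    qed
  qed
qed

lemma sum_restrict:
  fixes f :: "nat \<Rightarrow> 'a::comm_monoid_add"
  assumes "a0 + n \<le> m" "\<And>l. l < m \<Longrightarrow> \<not> (a0 \<le> l \<and> l < a0 + n) \<Longrightarrow> f l = 0"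
  shows "(\<Sum>l<m. f l) = (\<Sum>t<n. f (a0 + t))"
proof -
  have "(\<Sum>l<m. f l) = (\<Sum>l\<in>{a0..<a0+n}. f l)"
    using assms by (intro sum.mono_neutral_right) auto
  also have "\<dots> = (\<Sum>t<n. f (a0 + t))"
    by (simp add: sum.shift_bounds_nat_ivl[symmetric] lessThan_atLeast0 add.commute)
  finally show ?thesis .
qed

lemma unitary_col:
  assumes "U \<in> unitary_mat m" "i < m" "j < m"
  shows "(\<Sum>l<m. cnj (U $$ (l,i)) * U $$ (l,j)) = (if i = j then 1 else 0)"
proof -
  note u = unitaryD[OF assms(1)]
  have "(\<Sum>l<m. cnj (U $$ (l,i)) * U $$ (l,j)) = (adjoint_mat U * U) $$ (i,j)"
    using u assms by (subst mult_entry[of _ m m _ m]) auto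
  then show ?thesis using u assms by simp
qed

lemma unitary_row:
  assumes "U \<in> unitary_mat m" "i < m" "j < m"
  shows "(\<Sum>l<m. cnj (U $$ (j,l)) * U $$ (i,l)) = (if i = j then 1 else 0)"
proof -
  note u = unitaryD[OF assms(1)]
  have "(\<Sum>l<m. cnj (U $$ (j,l)) * U $$ (i,l)) = (U * adjoint_mat U) $$ (i,j)"
    using u assms by (subst mult_entry[of _ m m _ m]) (auto simp: mult.commute)
  then show ?thesis using u assms by simp
qed

lemma sum_pm:
  fixes a b c d :: "nat \<Rightarrow> complex"
  shows "(\<Sum>l<m. cnj (a l + b l) * (c l + d l)) + (\<Sum>l<m. cnj (a l - b l) * (c l - d l))
     = 2 * ((\<Sum>l<m. cnj (a l) * c l) + (\<Sum>l<m. cnj (b l) * d l))"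
    and "(\<Sum>l<m. cnj (a l + b l) * (c l + d l)) - (\<Sum>l<m. cnj (a l - b l) * (c l - d l))
     = 2 * ((\<Sum>l<m. cnj (a l) * d l) + (\<Sum>l<m. cnj (b l) * c l))"
proof -
  have p1: "cnj (a l + b l) * (c l + d l) + cnj (a l - b l) * (c l - d l) = 2 * (cnj (a l) * c l + cnj (b l) * d l)" for l
    by (simp add: algebra_simps)
  have p2: "cnj (a l + b l) * (c l + d l) - cnj (a l - b l) * (c l - d l) = 2 * (cnj (a l) * d l + cnj (b l) * c l)" for l
    by (simp add: algebra_simps)
  show "(\<Sum>l<m. cnj (a l + b l) * (c l + d l)) + (\<Sum>l<m. cnj (a l - b l) * (c l - d l))
     = 2 * ((\<Sum>l<m. cnj (a l) * c l) + (\<Sum>l<m. cnj (b l) * d l))"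
    unfolding sum.distrib[symmetric] sum_distrib_left p1 ..
  show "(\<Sum>l<m. cnj (a l + b l) * (c l + d l)) - (\<Sum>l<m. cnj (a l - b l) * (c l - d l))
     = 2 * ((\<Sum>l<m. cnj (a l) * d l) + (\<Sum>l<m. cnj (b l) * c l))"
    unfolding sum_subtractf[symmetric] sum.distrib[symmetric] sum_distrib_left p2 ..
qed

lemma half_lemma: "x + x = 2 * y \<Longrightarrow> y = (x::complex)"
  by (metis mult_2 mult_cancel_left zero_neq_numeral)

lemma half_lemma2: "x - x = 2 * y \<Longrightarrow> y = (0::complex)"
  by simp

lemma pm_lemma:
  assumes P: "P \<in> carrier_mat m m" and Q: "Q \<in> carrier_mat m m"
    and u1: "P + Q \<in> unitary_mat m" and u2: "P - Q \<in> unitary_mat m"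
    and i: "i < m" and j: "j < m"
  shows "(\<Sum>l<m. cnj (P $$ (l,i)) * P $$ (l,j)) + (\<Sum>l<m. cnj (Q $$ (l,i)) * Q $$ (l,j)) = (if i = j then 1 else 0)"
    and "(\<Sum>l<m. cnj (P $$ (j,l)) * P $$ (i,l)) + (\<Sum>l<m. cnj (Q $$ (j,l)) * Q $$ (i,l)) = (if i = j then 1 else 0)"
    and "(\<Sum>l<m. cnj (P $$ (l,i)) * Q $$ (l,j)) + (\<Sum>l<m. cnj (Q $$ (l,i)) * P $$ (l,j)) = 0"
proof -
  have c1: "(\<Sum>l<m. cnj (P $$ (l,i) + Q $$ (l,i)) * (P $$ (l,j) + Q $$ (l,j))) = (if i = j then 1 else 0)"
    using unitary_col[OF u1 i j] P Q i j by (metis (no_types, lifting) carrier_matD index_add_mat(1) lessThan_iff sum.cong)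
  have c2: "(\<Sum>l<m. cnj (P $$ (l,i) - Q $$ (l,i)) * (P $$ (l,j) - Q $$ (l,j))) = (if i = j then 1 else 0)"
    using unitary_col[OF u2 i j] P Q i j by (metis (no_types, lifting) carrier_matD index_minus_mat(1) lessThan_iff sum.cong)
  have r1: "(\<Sum>l<m. cnj (P $$ (j,l) + Q $$ (j,l)) * (P $$ (i,l) + Q $$ (i,l))) = (if i = j then 1 else 0)"
    using unitary_row[OF u1 i j] P Q i j by (metis (no_types, lifting) carrier_matD index_add_mat(1) lessThan_iff sum.cong)
  have r2: "(\<Sum>l<m. cnj (P $$ (j,l) - Q $$ (j,l)) * (P $$ (i,l) - Q $$ (i,l))) = (if i = j then 1 else 0)"
    using unitary_row[OF u2 i j] P Q i j by (metis (no_types, lifting) carrier_matD index_minus_mat(1) lessThan_iff sum.cong)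
  show "(\<Sum>l<m. cnj (P $$ (l,i)) * P $$ (l,j)) + (\<Sum>l<m. cnj (Q $$ (l,i)) * Q $$ (l,j)) = (if i = j then 1 else 0)"
    by (rule half_lemma, rule sum_pm(1)[of "\<lambda>l. P $$ (l,i)" "\<lambda>l. Q $$ (l,i)" "\<lambda>l. P $$ (l,j)" "\<lambda>l. Q $$ (l,j)" m, unfolded c1 c2])
  show "(\<Sum>l<m. cnj (P $$ (j,l)) * P $$ (i,l)) + (\<Sum>l<m. cnj (Q $$ (j,l)) * Q $$ (i,l)) = (if i = j then 1 else 0)"
    by (rule half_lemma, rule sum_pm(1)[of "\<lambda>l. P $$ (j,l)" "\<lambda>l. Q $$ (j,l)" "\<lambda>l. P $$ (i,l)" "\<lambda>l. Q $$ (i,l)" m, unfolded r1 r2])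
  show "(\<Sum>l<m. cnj (P $$ (l,i)) * Q $$ (l,j)) + (\<Sum>l<m. cnj (Q $$ (l,i)) * P $$ (l,j)) = 0"
    by (rule half_lemma2, rule sum_pm(2)[of "\<lambda>l. P $$ (l,i)" "\<lambda>l. Q $$ (l,i)" "\<lambda>l. P $$ (l,j)" "\<lambda>l. Q $$ (l,j)" m, unfolded c1 c2])
qed

lemma solve_lemma: "a + b = (c::complex) \<Longrightarrow> b = c - a"
  by (simp add: eq_diff_eq add.commute)

lemma part2_generic:
  fixes vs :: "real list" and ns :: "nat list"
  assumes len: "length vs = length ns" and dist: "distinct vs" and vsb: "\<forall>v\<in>set vs. 0 \<le> v"
    and msum: "sum_list ns = m"
    and U: "U \<in> unitary_mat m" and V: "V \<in> unitary_mat m" and Y: "Y \<in> carrier_mat m m"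
    and X: "X = U * diagm m (\<lambda>i. complex_of_real (vs ! blk ns i)) * V"
    and u1: "X + Y \<in> unitary_mat m" and u2: "X - Y \<in> unitary_mat m"
  shows "\<exists>Z. Y = U * diag_block_mat (map (blockof Z ns) [0..<length ns]) * V \<and>
     (\<forall>b<length ns. \<forall>k<ns!b. \<forall>l<ns!b. (\<Sum>t<ns!b. cnj (blockof Z ns b $$ (t,k)) * blockof Z ns b $$ (t,l))
          = (if k = l then 1 - (complex_of_real (vs!b))\<^sup>2 else 0)) \<and>
     (\<forall>b<length ns. vs!b \<noteq> 0 \<longrightarrow> (\<forall>k<ns!b. \<forall>l<ns!b. cnj (blockof Z ns b $$ (l,k)) = - blockof Z ns b $$ (k,l)))"
proof -
  note u = unitaryD[OF U] and v = unitaryD[OF V]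
  define dr where "dr = (\<lambda>i. vs ! blk ns i)"
  define D where "D = diagm m (\<lambda>i. complex_of_real (dr i))"
  have Dc: "D \<in> carrier_mat m m" unfolding D_def by simp
  define Z where "Z = adjoint_mat U * Y * adjoint_mat V"
  have Zc: "Z \<in> carrier_mat m m" unfolding Z_def using u v Y by auto
  have YZ: "Y = U * Z * V"
  proof -
    have "U * Z * V = U * (adjoint_mat U * (Y * (adjoint_mat V * V)))"
      unfolding Z_def using u v Y by (simp add: mult_carrier_mat[of _ m m] assoc_mult_mat[of _ m m _ m _ m])
    also have "\<dots> = Y" using v Y unitary_cancel_left(2)[OF U Y] by simp
    finally show ?thesis by simp
  qed
  have XD: "X = U * D * V" unfolding X D_def dr_def ..
  have "X + Y = U * (D + Z) * V"
    unfolding XD YZ using u v Dc Zc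
    by (simp add: mult_add_distrib_mat[of U m m D m Z] add_mult_distrib_mat[of "U * D" m m "U * Z" V m])
  with u1 have w1: "D + Z \<in> unitary_mat m" using unitary_cancel[OF U V] Dc Zc by auto
  have "X - Y = U * (D - Z) * V"
    unfolding XD YZ using u v Dc Zc
    by (simp add: mult_minus_distrib_mat[of U m m D m Z] minus_mult_distrib_mat[of "U * D" m m "U * Z" V m])
  moreover have "D - Z \<in> carrier_mat m m" using Zc by (intro carrier_matI) auto
  ultimately have w2: "D - Z \<in> unitary_mat m" using u2 unitary_cancel[OF U V] by auto
  note pm = pm_lemma[OF Dc Zc w1 w2]
  have Dent: "D $$ (i,j) = (if i = j then complex_of_real (dr i) else 0)" if "i < m" "j < m" for i j
    using that unfolding D_def by simp
  have E1: "(\<Sum>l<m. cnj (Z $$ (l,i)) * Z $$ (l,j)) = (if i = j then 1 - (complex_of_real (dr i))\<^sup>2 else 0)"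
    if i: "i < m" and j: "j < m" for i j
  proof -
    have "(\<Sum>l<m. cnj (D $$ (l,i)) * D $$ (l,j)) = cnj (D $$ (i,i)) * D $$ (i,j)"
      using i j by (intro sum_single_nz) (auto simp: Dent)
    moreover have "(\<Sum>l<m. cnj (Z $$ (l,i)) * Z $$ (l,j)) = (if i = j then 1 else 0) - (\<Sum>l<m. cnj (D $$ (l,i)) * D $$ (l,j))"
      using pm(1)[OF i j] by (rule solve_lemma)
    ultimately show ?thesis using i j by (auto simp: Dent power2_eq_square)
  qed
  have E2: "(\<Sum>l<m. cnj (Z $$ (j,l)) * Z $$ (i,l)) = (if i = j then 1 - (complex_of_real (dr i))\<^sup>2 else 0)"
    if i: "i < m" and j: "j < m" for i j
  proof -
    have "(\<Sum>l<m. cnj (D $$ (j,l)) * D $$ (i,l)) = cnj (D $$ (j,i)) * D $$ (i,i)"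
      using i j by (intro sum_single_nz) (auto simp: Dent)
    moreover have "(\<Sum>l<m. cnj (Z $$ (j,l)) * Z $$ (i,l)) = (if i = j then 1 else 0) - (\<Sum>l<m. cnj (D $$ (j,l)) * D $$ (i,l))"
      using pm(2)[OF i j] by (rule solve_lemma)
    ultimately show ?thesis using i j by (auto simp: Dent power2_eq_square)
  qed
  have E3: "complex_of_real (dr i) * Z $$ (i,j) + cnj (Z $$ (j,i)) * complex_of_real (dr j) = 0"
    if i: "i < m" and j: "j < m" for i j
  proof -
    have "(\<Sum>l<m. cnj (D $$ (l,i)) * Z $$ (l,j)) = cnj (D $$ (i,i)) * Z $$ (i,j)"
      using i j by (intro sum_single_nz) (auto simp: Dent)
    moreover have "(\<Sum>l<m. cnj (Z $$ (l,i)) * D $$ (l,j)) = cnj (Z $$ (j,i)) * D $$ (j,j)"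
      using i j by (intro sum_single_nz) (auto simp: Dent)
    ultimately show ?thesis using pm(3)[OF i j] i j by (auto simp: Dent)
  qed
  define G where "G = diagm m (\<lambda>i. 1 - (complex_of_real (dr i))\<^sup>2)"
  have ZZ1: "adjoint_mat Z * Z = G"
  proof (rule eq_matI)
    fix i j assume "i < dim_row G" "j < dim_col G"
    then have i: "i < m" and j: "j < m" unfolding G_def by auto
    show "(adjoint_mat Z * Z) $$ (i,j) = G $$ (i,j)"
      using Zc i j E1[OF i j] unfolding G_def by (subst mult_entry[of _ m m _ m]) auto
  qed (use Zc in \<open>auto simp: G_def\<close>)
  have ZZ2: "Z * adjoint_mat Z = G"
  proof (rule eq_matI)
    fix i j assume "i < dim_row G" "j < dim_col G"
    then have i: "i < m" and j: "j < m" unfolding G_def by auto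
    show "(Z * adjoint_mat Z) $$ (i,j) = G $$ (i,j)"
      using Zc i j E2[OF i j] unfolding G_def by (subst mult_entry[of _ m m _ m]) (auto simp: mult.commute)
  qed (use Zc in \<open>auto simp: G_def\<close>)
  have comm: "Z * G = G * Z"
  proof -
    have "Z * G = Z * (adjoint_mat Z * Z)" using ZZ1 by simp
    also have "\<dots> = (Z * adjoint_mat Z) * Z" by (rule massoc) (use Zc in auto)
    also have "\<dots> = G * Z" using ZZ2 by simp
    finally show ?thesis .
  qed
  have bd: "Z $$ (i,j) = 0" if i: "i < sum_list ns" and j: "j < sum_list ns" and b: "blk ns i \<noteq> blk ns j" for i j
  proof -
    have i': "i < m" and j': "j < m" using i j msum by auto
    have "dr i \<noteq> dr j" unfolding dr_def using b blk_lt[OF i] blk_lt[OF j] dist len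
      by (simp add: nth_eq_iff_index_eq)
    moreover have "dr i \<ge> 0" "dr j \<ge> 0" unfolding dr_def using vsb blk_lt[OF i] blk_lt[OF j] len
      by (auto simp: nth_mem)
    ultimately have "(dr i)\<^sup>2 \<noteq> (dr j)\<^sup>2" by (metis power2_eq_iff_nonneg)
    then have ne: "(1 - (complex_of_real (dr i))\<^sup>2) \<noteq> 1 - (complex_of_real (dr j))\<^sup>2"
    proof -
      assume nsq: "(dr i)\<^sup>2 \<noteq> (dr j)\<^sup>2"
      show ?thesis
      proof
        assume h: "1 - (complex_of_real (dr i))\<^sup>2 = 1 - (complex_of_real (dr j))\<^sup>2"
        have "complex_of_real ((dr i)\<^sup>2) = complex_of_real ((dr j)\<^sup>2)" using h by simp
        then show False using nsq by (simp only: of_real_eq_iff)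
      qed
    qed
    have "(Z * G) $$ (i,j) = (G * Z) $$ (i,j)" using comm by simp
    then have "Z $$ (i,j) * (1 - (complex_of_real (dr j))\<^sup>2) = (1 - (complex_of_real (dr i))\<^sup>2) * Z $$ (i,j)"
      unfolding G_def using diagm_mult_left[OF Zc i' j'] diagm_mult_right[OF Zc i' j'] by simp
    with ne show ?thesis by (simp add: mult.commute)
  qed
  have Zb: "Z = diag_block_mat (map (blockof Z ns) [0..<length ns])"
    by (rule dbm_blocks) (use Zc msum bd in auto)
  have gram: "(\<Sum>t<ns!b. cnj (blockof Z ns b $$ (t,k)) * blockof Z ns b $$ (t,l))
          = (if k = l then 1 - (complex_of_real (vs!b))\<^sup>2 else 0)"
    if b: "b < length ns" and k: "k < ns!b" and l: "l < ns!b" for b k l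
  proof -
    let ?o = "off ns b"
    have ob: "?o + ns!b \<le> m" using off_bound[OF b] msum by simp
    have ok: "?o + k < sum_list ns" "?o + l < sum_list ns" using ob k l msum by auto
    have bk: "blk ns (?o + k) = b" "blk ns (?o + l) = b" using blk_eq[OF b] k l by auto
    have "(\<Sum>t<ns!b. cnj (blockof Z ns b $$ (t,k)) * blockof Z ns b $$ (t,l))
        = (\<Sum>t<ns!b. cnj (Z $$ (?o + t, ?o + k)) * Z $$ (?o + t, ?o + l))"
      using k l by (intro sum.cong) (auto simp: blockof_def)
    also have "\<dots> = (\<Sum>t<m. cnj (Z $$ (t, ?o + k)) * Z $$ (t, ?o + l))"
    proof (rule sum_restrict[symmetric, OF ob])
      fix t assume t: "t < m" and nt: "\<not> (?o \<le> t \<and> t < ?o + ns ! b)"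
      then have "blk ns t \<noteq> b" using blk_iff[of t ns b] b msum by auto
      then have "Z $$ (t, ?o + k) = 0" using bd[of t "?o + k"] t msum ok bk by auto
      then show "cnj (Z $$ (t, ?o + k)) * Z $$ (t, ?o + l) = 0" by simp
    qed
    also have "\<dots> = (if k = l then 1 - (complex_of_real (vs!b))\<^sup>2 else 0)"
      using E1[of "?o + k" "?o + l"] ob k l bk unfolding dr_def by auto
    finally show ?thesis .
  qed
  have skew: "cnj (blockof Z ns b $$ (l,k)) = - blockof Z ns b $$ (k,l)"
    if b: "b < length ns" and nz: "vs!b \<noteq> 0" and k: "k < ns!b" and l: "l < ns!b" for b k l
  proof -
    let ?o = "off ns b"
    have ob: "?o + ns!b \<le> m" using off_bound[OF b] msum by simp
    have bk: "blk ns (?o + k) = b" "blk ns (?o + l) = b" using blk_eq[OF b] k l by auto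
    have "complex_of_real (vs!b) * Z $$ (?o+k, ?o+l) + cnj (Z $$ (?o+l, ?o+k)) * complex_of_real (vs!b) = 0"
      using E3[of "?o + k" "?o + l"] ob k l bk unfolding dr_def by auto
    then have "complex_of_real (vs!b) * (Z $$ (?o+k, ?o+l) + cnj (Z $$ (?o+l, ?o+k))) = 0"
      by (simp add: algebra_simps)
    then have "Z $$ (?o+k, ?o+l) + cnj (Z $$ (?o+l, ?o+k)) = 0" using nz by simp
    then have "cnj (Z $$ (?o+l, ?o+k)) = - Z $$ (?o+k, ?o+l)" by (metis add.commute eq_neg_iff_add_eq_0)
    then show ?thesis using k l by (simp add: blockof_def)
  qed
  have Y': "Y = U * diag_block_mat (map (blockof Z ns) [0..<length ns]) * V"
    unfolding YZ by (rule arg_cong[of _ _ "\<lambda>M. U * M * V"], rule Zb)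
  show ?thesis
    by (rule exI[of _ Z]) (use Y' gram skew in blast)
qed

lemma diagm_cong: "(\<And>i. i < n \<Longrightarrow> f i = g i) \<Longrightarrow> diagm n f = diagm n g"
  by (rule eq_matI) auto

lemma zero_from_gram:
  assumes "\<And>k. k < n \<Longrightarrow> (\<Sum>t<n. cnj (B $$ (t,k)) * B $$ (t,k)) = 0" "t < n" "k < n"
  shows "B $$ (t,k) = 0"
proof -
  have "(\<Sum>t<n. cnj (B $$ (t,k)) * B $$ (t,k)) = complex_of_real (\<Sum>t<n. (cmod (B $$ (t,k)))\<^sup>2)"
    unfolding of_real_sum by (rule sum.cong, simp, subst complex_norm_square, simp add: mult.commute)
  then have "(\<Sum>t<n. (cmod (B $$ (t,k)))\<^sup>2) = 0" using assms(1)[OF assms(3)] by (metis of_real_eq_0_iff)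
  then have "\<forall>t\<in>{..<n}. (cmod (B $$ (t,k)))\<^sup>2 = 0" by (subst sum_nonneg_eq_0_iff[symmetric]) auto
  then show ?thesis using assms(2) by auto
qed

lemma sum_list_map_upt: "sum_list (map f [0..<r]) = (\<Sum>j<r. f j)"
  by (induction r) auto

lemma stmt_list_eq:
  "[1\<^sub>m p, 0\<^sub>m q q] @ map (\<lambda>j. complex_of_real (s j) \<cdot>\<^sub>m 1\<^sub>m (ms j)) [0..<r]
   = map (\<lambda>b. map complex_of_real ([1, 0] @ map s [0..<r]) ! b \<cdot>\<^sub>m 1\<^sub>m (([p, q] @ map ms [0..<r]) ! b)) [0..<length ([p, q] @ map ms [0..<r])]"
proof (rule nth_equalityI)
  fix b assume "b < length ([1\<^sub>m p, 0\<^sub>m q q] @ map (\<lambda>j. complex_of_real (s j) \<cdot>\<^sub>m 1\<^sub>m (ms j)) [0..<r])"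
  then have b: "b < r + 2" by simp
  have rhs: "map (\<lambda>b. map complex_of_real ([1, 0] @ map s [0..<r]) ! b \<cdot>\<^sub>m 1\<^sub>m (([p, q] @ map ms [0..<r]) ! b)) [0..<length ([p, q] @ map ms [0..<r])] ! b
     = map complex_of_real ([1, 0] @ map s [0..<r]) ! b \<cdot>\<^sub>m 1\<^sub>m (([p, q] @ map ms [0..<r]) ! b)"
    using b by (intro nth_map_upt[where m=0, simplified]) simp
  consider "b = 0" | "b = 1" | j where "b = j + 2" "j < r"
  proof -
    assume h0: "b = 0 \<Longrightarrow> thesis" and h1: "b = 1 \<Longrightarrow> thesis" and h2: "\<And>j. b = j + 2 \<Longrightarrow> j < r \<Longrightarrow> thesis"
    show thesis
    proof (cases "b < 2")
      case True then show ?thesis using h0 h1 by linarith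
    next
      case False then show ?thesis using h2[of "b - 2"] b by simp
    qed
  qed
  then show "([1\<^sub>m p, 0\<^sub>m q q] @ map (\<lambda>j. complex_of_real (s j) \<cdot>\<^sub>m 1\<^sub>m (ms j)) [0..<r]) ! b =
    map (\<lambda>b. map complex_of_real ([1, 0] @ map s [0..<r]) ! b \<cdot>\<^sub>m 1\<^sub>m (([p, q] @ map ms [0..<r]) ! b)) [0..<length ([p, q] @ map ms [0..<r])] ! b"
  proof cases
    case 1 then show ?thesis unfolding rhs by (auto intro!: eq_matI)
  next
    case 2 then show ?thesis unfolding rhs by (auto intro!: eq_matI)
  next
    case 3 then show ?thesis unfolding rhs by (simp add: nth_append)
  qed
qed simp

lemma strict_dec_inj: "(\<forall>i j. i < j \<and> j < r \<longrightarrow> (s::nat\<Rightarrow>real) j < s i) \<Longrightarrow> inj_on s {0..<r}"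
  unfolding inj_on_def by (metis atLeastLessThan_iff less_irrefl linorder_neqE_nat)

lemma part2_stmt:
  fixes U V :: "complex mat" and s :: "nat \<Rightarrow> real"
  assumes U: "U \<in> unitary_mat m" and V: "V \<in> unitary_mat m"
    and sb: "\<forall>j<r. 0 < s j \<and> s j < 1" and sdec: "\<forall>i j. i < j \<and> j < r \<longrightarrow> s j < s i"
    and msum: "p + q + (\<Sum>j<r. ms j) = m"
    and X: "X = U * diag_block_mat ([1\<^sub>m p, 0\<^sub>m q q] @
              map (\<lambda>j. complex_of_real (s j) \<cdot>\<^sub>m 1\<^sub>m (ms j)) [0..<r]) * V"
    and Y: "Y \<in> carrier_mat m m" and u1: "X + Y \<in> unitary_mat m" and u2: "X - Y \<in> unitary_mat m"
  shows "\<exists>W (H :: nat \<Rightarrow> complex mat).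
             W \<in> unitary_mat q \<and>
             (\<forall>j<r. H j \<in> hermitian_mat (ms j) \<inter> unitary_mat (ms j)) \<and>
             Y = U * diag_block_mat ([0\<^sub>m p p, W] @
                   map (\<lambda>j. (\<i> * complex_of_real (sqrt (1 - (s j)\<^sup>2))) \<cdot>\<^sub>m H j) [0..<r]) * V"
proof -
  define vs where "vs = [1, 0] @ map s [0..<r]"
  define ns where "ns = [p, q] @ map ms [0..<r]"
  have len: "length vs = length ns" unfolding vs_def ns_def by simp
  have lns: "length ns = r + 2" unfolding ns_def by simp
  have dist: "distinct vs"
  proof -
    have "distinct (map s [0..<r])" using strict_dec_inj[OF sdec] by (simp add: distinct_map)
    moreover have "1 \<notin> set (map s [0..<r])" "0 \<notin> set (map s [0..<r])" using sb by auto
    ultimately show ?thesis unfolding vs_def by simp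
  qed
  have vsb: "\<forall>v\<in>set vs. 0 \<le> v" unfolding vs_def using sb by auto
  have nsum: "sum_list ns = m" unfolding ns_def using msum by (simp add: sum_list_map_upt)
  have D: "diag_block_mat ([1\<^sub>m p, 0\<^sub>m q q] @ map (\<lambda>j. complex_of_real (s j) \<cdot>\<^sub>m 1\<^sub>m (ms j)) [0..<r])
     = diagm m (\<lambda>i. complex_of_real (vs ! blk ns i))"
  proof -
    have "diag_block_mat ([1\<^sub>m p, 0\<^sub>m q q] @ map (\<lambda>j. complex_of_real (s j) \<cdot>\<^sub>m 1\<^sub>m (ms j)) [0..<r])
      = diagm (sum_list ns) (\<lambda>i. map complex_of_real vs ! blk ns i)"
      unfolding stmt_list_eq vs_def[symmetric] ns_def[symmetric] by (rule dbm_scalar) (simp add: len)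
    also have "\<dots> = diagm m (\<lambda>i. complex_of_real (vs ! blk ns i))"
      unfolding nsum[symmetric] by (rule diagm_cong) (use blk_lt len in auto)
    finally show ?thesis .
  qed
  from part2_generic[OF len dist vsb nsum U V Y X[unfolded D] u1 u2]
  obtain Z where YZ: "Y = U * diag_block_mat (map (blockof Z ns) [0..<length ns]) * V"
    and gram0: "\<forall>b<length ns. \<forall>k<ns!b. \<forall>l<ns!b. (\<Sum>t<ns!b. cnj (blockof Z ns b $$ (t,k)) * blockof Z ns b $$ (t,l))
          = (if k = l then 1 - (complex_of_real (vs!b))\<^sup>2 else 0)"
    and skew0: "\<forall>b<length ns. vs!b \<noteq> 0 \<longrightarrow> (\<forall>k<ns!b. \<forall>l<ns!b. cnj (blockof Z ns b $$ (l,k)) = - blockof Z ns b $$ (k,l))"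
    by (elim exE conjE)
  have gram: "(\<Sum>t<ns!b. cnj (blockof Z ns b $$ (t,k)) * blockof Z ns b $$ (t,l))
          = (if k = l then 1 - (complex_of_real (vs!b))\<^sup>2 else 0)"
    if "b < length ns" "k < ns!b" "l < ns!b" for b k l
    using gram0 that by blast
  have skew: "cnj (blockof Z ns b $$ (l,k)) = - blockof Z ns b $$ (k,l)"
    if "b < length ns" "vs!b \<noteq> 0" "k < ns!b" "l < ns!b" for b k l
    using skew0 that by blast
  define c where "c = (\<lambda>j. complex_of_real (sqrt (1 - (s j)\<^sup>2)))"
  have sq1: "(s j)\<^sup>2 < 1" if "j < r" for j
  proof -
    have a: "0 < s j" "s j < 1" using sb that by auto
    have "s j * s j < 1 * 1" by (rule mult_strict_mono) (use a in auto)
    then show ?thesis by (simp add: power2_eq_square)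
  qed
  have cpos: "sqrt (1 - (s j)\<^sup>2) > 0" if "j < r" for j
    using sq1[OF that] by simp
  have c0: "c j \<noteq> 0" if "j < r" for j using cpos[OF that] unfolding c_def by simp
  have c2: "c j * c j = 1 - (complex_of_real (s j))\<^sup>2" if "j < r" for j
  proof -
    have r: "sqrt (1 - (s j)\<^sup>2) * sqrt (1 - (s j)\<^sup>2) = 1 - (s j)\<^sup>2" using sq1[OF that] by simp
    have "complex_of_real (sqrt (1 - (s j)\<^sup>2) * sqrt (1 - (s j)\<^sup>2)) = complex_of_real (1 - (s j)\<^sup>2)"
      using r by (rule arg_cong)
    then show ?thesis unfolding c_def of_real_mult of_real_diff of_real_power of_real_1 .
  qed
  define W where "W = blockof Z ns 1"
  define H where "H = (\<lambda>j. (- \<i> / c j) \<cdot>\<^sub>m blockof Z ns (j + 2))"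
  have ns1: "ns ! 1 = q" and ns0: "ns ! 0 = p" and nsj: "\<And>j. j < r \<Longrightarrow> ns ! (j + 2) = ms j"
    unfolding ns_def by (auto simp: nth_append)
  have vs1: "vs ! 1 = 0" and vs0: "vs ! 0 = 1" and vsj: "\<And>j. j < r \<Longrightarrow> vs ! (j + 2) = s j"
    unfolding vs_def by (auto simp: nth_append)
  have Wu: "W \<in> unitary_mat q"
  proof (rule unitaryI)
    show Wc: "W \<in> carrier_mat q q" unfolding W_def blockof_def ns1 by simp
    show "adjoint_mat W * W = 1\<^sub>m q"
    proof (rule eq_matI)
      fix k l assume "k < dim_row (1\<^sub>m q)" "l < dim_col (1\<^sub>m q)"
      then have k: "k < q" and l: "l < q" by auto
      have "(adjoint_mat W * W) $$ (k,l) = (\<Sum>t<q. cnj (W $$ (t,k)) * W $$ (t,l))"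
        using Wc k l by (subst mult_entry[of _ q q _ q]) auto
      also have "\<dots> = (if k = l then 1 else 0)"
        using gram[of 1 k l] k l lns unfolding ns1 vs1 W_def by simp
      finally show "(adjoint_mat W * W) $$ (k,l) = 1\<^sub>m q $$ (k,l)" using k l by simp
    qed (use Wc in auto)
  qed
  have Hc: "H j \<in> carrier_mat (ms j) (ms j)" if "j < r" for j
    unfolding H_def blockof_def using nsj[OF that] by simp
  have Hh: "H j \<in> hermitian_mat (ms j)" if j: "j < r" for j
    unfolding hermitian_mat_def
  proof (intro CollectI conjI)
    show "H j \<in> carrier_mat (ms j) (ms j)" by (rule Hc[OF j])
    show "adjoint_mat (H j) = H j"
    proof (rule eq_matI)
      fix k l assume "k < dim_row (H j)" "l < dim_col (H j)"
      then have k: "k < ms j" and l: "l < ms j" using Hc[OF j] by auto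
      have sk: "cnj (blockof Z ns (j+2) $$ (l,k)) = - blockof Z ns (j+2) $$ (k,l)"
        using skew[of "j+2" k l] j k l lns sb unfolding vsj[OF j] nsj[OF j] by auto
      have "cnj (c j) = c j" unfolding c_def by simp
      then show "adjoint_mat (H j) $$ (k,l) = H j $$ (k,l)"
        using k l Hc[OF j] sk nsj[OF j] unfolding H_def by (simp add: blockof_def)
    qed (use Hc[OF j] in auto)
  qed
  have Hu: "H j \<in> unitary_mat (ms j)" if j: "j < r" for j
  proof (rule unitaryI[OF Hc[OF j]])
    show "adjoint_mat (H j) * H j = 1\<^sub>m (ms j)"
    proof (rule eq_matI)
      fix k l assume "k < dim_row (1\<^sub>m (ms j))" "l < dim_col (1\<^sub>m (ms j))"
      then have k: "k < ms j" and l: "l < ms j" by auto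
      let ?B = "blockof Z ns (j+2)"
      have Bc: "?B \<in> carrier_mat (ms j) (ms j)" unfolding blockof_def using nsj[OF j] by simp
      have cc: "cnj (c j) = c j" unfolding c_def by simp
      have "(adjoint_mat (H j) * H j) $$ (k,l) = (\<Sum>t<ms j. cnj (H j $$ (t,k)) * H j $$ (t,l))"
        using Hc[OF j] k l by (subst mult_entry[of _ "ms j" "ms j" _ "ms j"]) auto
      also have "\<dots> = (\<Sum>t<ms j. (1 / (c j * c j)) * (cnj (?B $$ (t,k)) * ?B $$ (t,l)))"
        by (rule sum.cong) (use Bc k l cc c0[OF j] in \<open>auto simp: H_def field_simps\<close>)
      also have "\<dots> = (1 / (c j * c j)) * (\<Sum>t<ms j. cnj (?B $$ (t,k)) * ?B $$ (t,l))"
        by (simp add: sum_distrib_left)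
      also have "(\<Sum>t<ms j. cnj (?B $$ (t,k)) * ?B $$ (t,l)) = (if k = l then c j * c j else 0)"
        using gram[of "j+2" k l] j k l lns unfolding nsj[OF j] vsj[OF j] c2[OF j] by simp
      also have "(1 / (c j * c j)) * \<dots> = 1\<^sub>m (ms j) $$ (k,l)" using k l c0[OF j] by simp
      finally show "(adjoint_mat (H j) * H j) $$ (k,l) = 1\<^sub>m (ms j) $$ (k,l)" .
    qed (use Hc[OF j] in auto)
  qed
  have blocks: "map (blockof Z ns) [0..<length ns] = [0\<^sub>m p p, W] @
                   map (\<lambda>j. (\<i> * complex_of_real (sqrt (1 - (s j)\<^sup>2))) \<cdot>\<^sub>m H j) [0..<r]"
  proof (rule nth_equalityI)
    show "length (map (blockof Z ns) [0..<length ns]) = length ([0\<^sub>m p p, W] @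
                   map (\<lambda>j. (\<i> * complex_of_real (sqrt (1 - (s j)\<^sup>2))) \<cdot>\<^sub>m H j) [0..<r])"
      using lns by simp
    fix b assume "b < length (map (blockof Z ns) [0..<length ns])"
    then have b: "b < r + 2" using lns by simp
    have lhs: "map (blockof Z ns) [0..<length ns] ! b = blockof Z ns b" using b lns by (intro nth_map_upt[where m=0, simplified]) simp
    consider "b = 0" | "b = 1" | j where "b = j + 2" "j < r"
    proof -
      assume h0: "b = 0 \<Longrightarrow> thesis" and h1: "b = 1 \<Longrightarrow> thesis" and h2: "\<And>j. b = j + 2 \<Longrightarrow> j < r \<Longrightarrow> thesis"
      show thesis
      proof (cases "b < 2")
        case True then show ?thesis using h0 h1 by linarith
      next
        case False then show ?thesis using h2[of "b - 2"] b by simp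
      qed
    qed
    then show "map (blockof Z ns) [0..<length ns] ! b = ([0\<^sub>m p p, W] @
                   map (\<lambda>j. (\<i> * complex_of_real (sqrt (1 - (s j)\<^sup>2))) \<cdot>\<^sub>m H j) [0..<r]) ! b"
    proof cases
      case 1
      have g: "\<And>k. k < p \<Longrightarrow> (\<Sum>t<p. cnj (blockof Z ns 0 $$ (t,k)) * blockof Z ns 0 $$ (t,k)) = 0"
        using gram[of 0] lns unfolding ns0 vs0 by simp
      show ?thesis unfolding lhs unfolding 1
        by (rule eq_matI) (use zero_from_gram[OF g] in \<open>auto simp: blockof_def ns0\<close>)
    next
      case 2 then show ?thesis unfolding lhs by (simp add: W_def)
    next
      case 3
      have "blockof Z ns (j + 2) = (\<i> * c j) \<cdot>\<^sub>m H j"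
        unfolding H_def using c0[OF 3(2)] by (intro eq_matI) (auto simp: blockof_def field_simps)
      then show ?thesis unfolding lhs using 3 by (simp add: nth_append c_def)
    qed
  qed
  show ?thesis
    using Wu Hh Hu YZ[unfolded blocks] by blast
qed

fun expand :: "nat list \<Rightarrow> 'a list \<Rightarrow> 'a list" where
  "expand (n # ns) (v # vs) = replicate n v @ expand ns vs"
| "expand _ _ = []"

lemma map_blk_expand:
  "length vs = length ns \<Longrightarrow> map (\<lambda>i. vs ! blk ns i) [0..<sum_list ns] = expand ns vs"
proof (induction ns arbitrary: vs)
  case Nil then show ?case by simp
next
  case (Cons n ns)
  then obtain v vs' where vs: "vs = v # vs'" and l: "length vs' = length ns" by (cases vs) auto
  have "[0..<n + sum_list ns] = [0..<n] @ [n..<n + sum_list ns]" by (rule upt_add_eq_append) simp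
  also have "[n..<n + sum_list ns] = map (\<lambda>i. i + n) [0..<sum_list ns]" by (simp add: map_add_upt add.commute)
  finally have u: "[0..<n + sum_list ns] = [0..<n] @ map (\<lambda>i. i + n) [0..<sum_list ns]" .
  have "map (\<lambda>i. vs ! blk (n # ns) i) [0..<n] = replicate n v"
    unfolding vs by (rule nth_equalityI) auto
  moreover have "map (\<lambda>i. vs ! blk (n # ns) i) (map (\<lambda>i. i + n) [0..<sum_list ns]) = map (\<lambda>i. vs' ! blk ns i) [0..<sum_list ns]"
    unfolding vs by simp
  ultimately show ?case unfolding vs using u Cons.IH[OF l] by simp
qed

lemma count_expand:
  "length vs = length ns \<Longrightarrow> count (mset (expand ns vs)) x = (\<Sum>b<length ns. if vs ! b = x then ns ! b else 0)"
proof (induction ns arbitrary: vs)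
  case Nil then show ?case by simp
next
  case (Cons n ns)
  then obtain v vs' where vs: "vs = v # vs'" and l: "length vs' = length ns" by (cases vs) auto
  have "(\<Sum>b<Suc (length ns). if (v # vs') ! b = x then (n # ns) ! b else 0)
     = (if v = x then n else 0) + (\<Sum>b<length ns. if vs' ! b = x then ns ! b else 0)"
    by (subst sum.lessThan_Suc_shift) (auto intro: sum.cong)
  then show ?case unfolding vs using Cons.IH[OF l] by simp
qed

lemma count_map_upt: "count (mset (map f [0..<m])) x = card {k. k < m \<and> f k = x}"
proof (induction m)
  case 0 then show ?case by simp
next
  case (Suc m)
  have "{k. k < Suc m \<and> f k = x} = {k. k < m \<and> f k = x} \<union> (if f m = x then {m} else {})" by (auto simp: less_Suc_eq)
  then show ?case using Suc by (auto simp: card_insert_if)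
qed

lemma perm_unitary:
  assumes pi: "g permutes {..<m}"
  defines "P \<equiv> mat m m (\<lambda>(i,j). if j = g i then (1::complex) else 0)"
  shows "P \<in> unitary_mat m"
    and "\<And>\<sigma>. P * diagm m \<sigma> * adjoint_mat P = diagm m (\<lambda>i. \<sigma> (g i))"
proof -
  have Pc: "P \<in> carrier_mat m m" unfolding P_def by simp
  have pim: "g i < m" if "i < m" for i using permutes_in_image[OF pi] that by auto
  have inj: "g i = g j \<longleftrightarrow> i = j" for i j using permutes_inj[OF pi] by (auto dest: injD)
  have invm: "inv_into UNIV g k < m" "g (inv_into UNIV g k) = k" if "k < m" for k
    using permutes_in_image[OF permutes_inv[OF pi]] that permutes_inverses[OF pi] by auto
  show "P \<in> unitary_mat m"
  proof (rule unitaryI[OF Pc], rule eq_matI)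
    fix k l assume "k < dim_row (1\<^sub>m m)" "l < dim_col (1\<^sub>m m)"
    then have k: "k < m" and l: "l < m" by auto
    have "(adjoint_mat P * P) $$ (k,l) = (\<Sum>i<m. cnj (P $$ (i,k)) * P $$ (i,l))"
      using Pc k l by (subst mult_entry[of _ m m _ m]) auto
    also have "\<dots> = cnj (P $$ (inv_into UNIV g k, k)) * P $$ (inv_into UNIV g k, l)"
    proof (rule sum_single_nz[OF invm(1)[OF k]])
      fix i assume i: "i < m" "i \<noteq> inv_into UNIV g k"
      then have "g i \<noteq> k" using invm[OF k] inj by metis
      then show "cnj (P $$ (i,k)) * P $$ (i,l) = 0" using i k unfolding P_def by simp
    qed
    also have "\<dots> = 1\<^sub>m m $$ (k,l)" using invm[OF k] k l unfolding P_def by auto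
    finally show "(adjoint_mat P * P) $$ (k,l) = 1\<^sub>m m $$ (k,l)" .
  qed (use Pc in auto)
  fix \<sigma>
  show "P * diagm m \<sigma> * adjoint_mat P = diagm m (\<lambda>i. \<sigma> (g i))"
  proof (rule eq_matI)
    fix i j assume "i < dim_row (diagm m (\<lambda>i. \<sigma> (g i)))" "j < dim_col (diagm m (\<lambda>i. \<sigma> (g i)))"
    then have i: "i < m" and j: "j < m" by auto
    have PS: "(P * diagm m \<sigma>) $$ (i,k) = P $$ (i,k) * \<sigma> k" if "k < m" for k
      using diagm_mult_right[OF Pc i that] .
    have "(P * diagm m \<sigma> * adjoint_mat P) $$ (i,j) = (\<Sum>k<m. (P * diagm m \<sigma>) $$ (i,k) * cnj (P $$ (j,k)))"
      using Pc i j by (subst mult_entry[of _ m m _ m]) auto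
    also have "\<dots> = (P * diagm m \<sigma>) $$ (i,g i) * cnj (P $$ (j,g i))"
      by (rule sum_single_nz[OF pim[OF i]]) (use PS i in \<open>auto simp: P_def\<close>)
    also have "\<dots> = diagm m (\<lambda>i. \<sigma> (g i)) $$ (i,j)"
      using PS[OF pim[OF i]] i j pim inj unfolding P_def by auto
    finally show "(P * diagm m \<sigma> * adjoint_mat P) $$ (i,j) = diagm m (\<lambda>i. \<sigma> (g i)) $$ (i,j)" .
  qed (use Pc in auto)
qed

lemma part1_stmt:
  fixes X Y :: "complex mat"
  assumes X: "X \<in> carrier_mat m m" and Y: "Y \<in> carrier_mat m m"
    and u1: "X + Y \<in> unitary_mat m" and u2: "X - Y \<in> unitary_mat m"
  shows "\<exists>U V (p::nat) (q::nat) (r::nat) (ms :: nat \<Rightarrow> nat) (s :: nat \<Rightarrow> real).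
       U \<in> unitary_mat m \<and> V \<in> unitary_mat m \<and>
       (\<forall>j<r. ms j > 0) \<and> (\<forall>j<r. 0 < s j \<and> s j < 1) \<and>
       (\<forall>i j. i < j \<and> j < r \<longrightarrow> s j < s i) \<and>
       p + q + (\<Sum>j<r. ms j) = m \<and>
       X = U * diag_block_mat ([1\<^sub>m p, 0\<^sub>m q q] @
              map (\<lambda>j. complex_of_real (s j) \<cdot>\<^sub>m 1\<^sub>m (ms j)) [0..<r]) * V"
proof -
  from contraction_svd[OF X Y u1 u2] obtain U0 V0 \<sigma> where U0: "U0 \<in> unitary_mat m"
    and V0: "V0 \<in> unitary_mat m" and \<sigma>b: "\<forall>k<m. 0 \<le> \<sigma> k \<and> \<sigma> k \<le> 1"
    and XS: "X = U0 * diagm m (\<lambda>k. complex_of_real (\<sigma> k)) * V0" by blast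
  define S' where "S' = \<sigma> ` {..<m} \<inter> {0<..<1}"
  have finS: "finite S'" unfolding S'_def by simp
  define L where "L = sorted_list_of_set S'"
  define sl where "sl = rev L"
  define r where "r = length sl"
  define s where "s = (\<lambda>j. sl ! j)"
  define ms where "ms = (\<lambda>j. card {k. k < m \<and> \<sigma> k = s j})"
  define p where "p = card {k. k < m \<and> \<sigma> k = 1}"
  define q where "q = card {k. k < m \<and> \<sigma> k = 0}"
  define vs where "vs = [1, 0] @ map s [0..<r]"
  define ns where "ns = [p, q] @ map ms [0..<r]"
  have setL: "set L = S'" unfolding L_def using finS by simp
  have distL: "distinct L" unfolding L_def by simp
  have lenL: "length L = r" unfolding r_def sl_def by simp
  have sortL: "sorted_wrt (<) L" unfolding L_def by simp
  have sS: "s j \<in> S'" if "j < r" for j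
    using that unfolding s_def r_def sl_def by (metis nth_mem set_rev setL)
  have sb: "\<forall>j<r. 0 < s j \<and> s j < 1" using sS unfolding S'_def by auto
  have msp: "\<forall>j<r. ms j > 0"
  proof (intro allI impI)
    fix j assume j: "j < r"
    then obtain k where "k < m" "\<sigma> k = s j" using sS[OF j] unfolding S'_def by auto
    then have "{k. k < m \<and> \<sigma> k = s j} \<noteq> {}" by auto
    then show "ms j > 0" unfolding ms_def by (simp add: card_gt_0_iff)
  qed
  have sdec: "\<forall>i j. i < j \<and> j < r \<longrightarrow> s j < s i"
  proof (intro allI impI)
    fix i j assume ij: "i < j \<and> j < r"
    have "s j = L ! (r - Suc j)" "s i = L ! (r - Suc i)"
      unfolding s_def sl_def using ij lenL by (auto simp: rev_nth)
    moreover have "L ! (r - Suc j) < L ! (r - Suc i)"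
      by (rule sorted_wrt_nth_less[OF sortL]) (use ij lenL in auto)
    ultimately show "s j < s i" by simp
  qed
  have len: "length vs = length ns" unfolding vs_def ns_def by simp
  have lns: "length ns = r + 2" unfolding ns_def by simp
  have sinj: "inj_on s {0..<r}" by (rule strict_dec_inj[OF sdec])
  have counts: "(\<Sum>b<length ns. if vs ! b = x then ns ! b else 0) = card {k. k < m \<and> \<sigma> k = x}" for x
  proof -
    have "(\<Sum>b<length ns. if vs ! b = x then ns ! b else 0)
        = (if x = 1 then p else 0) + ((if x = 0 then q else 0) + (\<Sum>j<r. if s j = x then ms j else 0))"
    proof -
      have "(\<Sum>b<length ns. if vs ! b = x then ns ! b else 0)
        = (if vs ! 0 = x then ns ! 0 else 0) + ((if vs ! 1 = x then ns ! 1 else 0) +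
          (\<Sum>j<r. if vs ! Suc (Suc j) = x then ns ! Suc (Suc j) else 0))"
        unfolding lns by (simp add: sum.lessThan_Suc_shift del: sum.lessThan_Suc)
      also have "(\<Sum>j<r. if vs ! Suc (Suc j) = x then ns ! Suc (Suc j) else 0) = (\<Sum>j<r. if s j = x then ms j else 0)"
        by (rule sum.cong) (auto simp: vs_def ns_def nth_append)
      finally show ?thesis by (simp add: vs_def ns_def)
    qed
    also have "\<dots> = card {k. k < m \<and> \<sigma> k = x}"
    proof (cases "x = 1 \<or> x = 0")
      case True
      then have "(\<Sum>j<r. if s j = x then ms j else 0) = 0" using sb by (intro sum.neutral) auto
      with True show ?thesis unfolding p_def q_def by auto
    next
      case False
      show ?thesis
      proof (cases "x \<in> S'")
        case True
        then obtain j0 where j0: "j0 < r" "s j0 = x"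
          unfolding s_def r_def sl_def using setL by (metis in_set_conv_nth length_rev set_rev)
        have "(\<Sum>j<r. if s j = x then ms j else 0) = (if s j0 = x then ms j0 else 0)"
        proof (rule sum_single_nz[OF j0(1)])
          fix j assume "j < r" "j \<noteq> j0"
          then have "s j \<noteq> s j0" using sinj j0 by (auto dest: inj_onD)
          then show "(if s j = x then ms j else 0) = 0" using j0 by simp
        qed
        then show ?thesis using False j0 unfolding ms_def by simp
      next
        case notS: False
        have "(\<Sum>j<r. if s j = x then ms j else 0) = 0" using sS notS by (intro sum.neutral) auto
        moreover have "{k. k < m \<and> \<sigma> k = x} = {}"
        proof -
          have "\<sigma> k \<noteq> x" if "k < m" for k
          proof
            assume "\<sigma> k = x"
            then have "x \<in> S'" using \<sigma>b that False unfolding S'_def by force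
            with notS show False by simp
          qed
          then show ?thesis by auto
        qed
        ultimately show ?thesis using False by simp
      qed
    qed
    finally show ?thesis .
  qed
  define dfun where "dfun = (\<lambda>i. vs ! blk ns i)"
  have ms_eq: "mset (map dfun [0..<sum_list ns]) = mset (map \<sigma> [0..<m])"
  proof (rule multiset_eqI)
    fix x
    show "count (mset (map dfun [0..<sum_list ns])) x = count (mset (map \<sigma> [0..<m])) x"
      unfolding dfun_def map_blk_expand[OF len] count_expand[OF len] count_map_upt counts ..
  qed
  have nsum: "sum_list ns = m"
    using arg_cong[OF ms_eq, of size] by simp
  then have msum: "p + q + (\<Sum>j<r. ms j) = m" unfolding ns_def by (simp add: sum_list_map_upt)
  from mset_eq_permutation[OF ms_eq] obtain g where g: "g permutes {..<length (map \<sigma> [0..<m])}"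
    and pl: "permute_list g (map \<sigma> [0..<m]) = map dfun [0..<sum_list ns]" by blast
  have gm: "g permutes {..<m}" using g by simp
  have dg: "dfun i = \<sigma> (g i)" if i: "i < m" for i
  proof -
    have "dfun i = map dfun [0..<sum_list ns] ! i" using i nsum by simp
    also have "\<dots> = permute_list g (map \<sigma> [0..<m]) ! i" using pl by simp
    also have "\<dots> = map \<sigma> [0..<m] ! g i" using permute_list_nth[OF g] i by simp
    also have "\<dots> = \<sigma> (g i)" using permutes_in_image[OF gm] i by simp
    finally show ?thesis .
  qed
  define P where "P = mat m m (\<lambda>(i,j). if j = g i then (1::complex) else 0)"
  have Pu: "P \<in> unitary_mat m" unfolding P_def by (rule perm_unitary(1)[OF gm])
  note pu = unitaryD[OF Pu]
  have PSP: "P * diagm m (\<lambda>k. complex_of_real (\<sigma> k)) * adjoint_mat P = diagm m (\<lambda>i. complex_of_real (dfun i))"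
    unfolding P_def perm_unitary(2)[OF gm] by (rule diagm_cong) (simp add: dg)
  have D: "diag_block_mat ([1\<^sub>m p, 0\<^sub>m q q] @ map (\<lambda>j. complex_of_real (s j) \<cdot>\<^sub>m 1\<^sub>m (ms j)) [0..<r])
     = diagm m (\<lambda>i. complex_of_real (dfun i))"
  proof -
    have "diag_block_mat ([1\<^sub>m p, 0\<^sub>m q q] @ map (\<lambda>j. complex_of_real (s j) \<cdot>\<^sub>m 1\<^sub>m (ms j)) [0..<r])
      = diagm (sum_list ns) (\<lambda>i. map complex_of_real vs ! blk ns i)"
      unfolding stmt_list_eq vs_def[symmetric] ns_def[symmetric] by (rule dbm_scalar) (simp add: len)
    also have "\<dots> = diagm m (\<lambda>i. complex_of_real (dfun i))"
      unfolding nsum[symmetric] dfun_def by (rule diagm_cong) (use blk_lt len in auto)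
    finally show ?thesis .
  qed
  define \<Sigma> where "\<Sigma> = diagm m (\<lambda>k. complex_of_real (\<sigma> k))"
  have Sc: "\<Sigma> \<in> carrier_mat m m" unfolding \<Sigma>_def by simp
  note u0 = unitaryD[OF U0] and v0 = unitaryD[OF V0]
  have "(U0 * adjoint_mat P) * (P * \<Sigma> * adjoint_mat P) * (P * V0)
      = U0 * (adjoint_mat P * (P * (\<Sigma> * (adjoint_mat P * (P * V0)))))"
    using u0 v0 pu Sc by (simp add: mult_carrier_mat[of _ m m] assoc_mult_mat[of _ m m _ m _ m])
  also have "\<dots> = U0 * \<Sigma> * V0"
    using unitary_cancel_left(1)[OF Pu, of V0 m] unitary_cancel_left(1)[OF Pu, of "\<Sigma> * V0" m] u0 v0 Sc
    by (simp add: mult_carrier_mat[of _ m m] assoc_mult_mat[of _ m m _ m _ m])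
  finally have "X = (U0 * adjoint_mat P) * diag_block_mat ([1\<^sub>m p, 0\<^sub>m q q] @ map (\<lambda>j. complex_of_real (s j) \<cdot>\<^sub>m 1\<^sub>m (ms j)) [0..<r]) * (P * V0)"
    unfolding D PSP[folded \<Sigma>_def] XS \<Sigma>_def[symmetric] by simp
  moreover have "U0 * adjoint_mat P \<in> unitary_mat m" by (rule unitary_mult[OF U0 unitary_adj[OF Pu]])
  moreover have "P * V0 \<in> unitary_mat m" by (rule unitary_mult[OF Pu V0])
  ultimately show ?thesis using msp sb sdec msum by blast
qed

theorem lemma3p7:
  fixes m :: nat and X :: "complex mat"
  assumes X: "X \<in> carrier_mat m m"
    and ex: "\<exists>Y \<in> carrier_mat m m. X + Y \<in> unitary_mat m \<and> X - Y \<in> unitary_mat m"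
  shows
   "(\<exists>U V (p::nat) (q::nat) (r::nat) (ms :: nat \<Rightarrow> nat) (s :: nat \<Rightarrow> real).
       U \<in> unitary_mat m \<and> V \<in> unitary_mat m \<and>
       (\<forall>j<r. ms j > 0) \<and> (\<forall>j<r. 0 < s j \<and> s j < 1) \<and>
       (\<forall>i j. i < j \<and> j < r \<longrightarrow> s j < s i) \<and>
       p + q + (\<Sum>j<r. ms j) = m \<and>
       X = U * diag_block_mat ([1\<^sub>m p, 0\<^sub>m q q] @
              map (\<lambda>j. complex_of_real (s j) \<cdot>\<^sub>m 1\<^sub>m (ms j)) [0..<r]) * V)
    \<and>
    (\<forall>U V (p::nat) (q::nat) (r::nat) (ms :: nat \<Rightarrow> nat) (s :: nat \<Rightarrow> real).
       U \<in> unitary_mat m \<and> V \<in> unitary_mat m \<and>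
       (\<forall>j<r. ms j > 0) \<and> (\<forall>j<r. 0 < s j \<and> s j < 1) \<and>
       (\<forall>i j. i < j \<and> j < r \<longrightarrow> s j < s i) \<and>
       p + q + (\<Sum>j<r. ms j) = m \<and>
       X = U * diag_block_mat ([1\<^sub>m p, 0\<^sub>m q q] @
              map (\<lambda>j. complex_of_real (s j) \<cdot>\<^sub>m 1\<^sub>m (ms j)) [0..<r]) * V
     \<longrightarrow> (\<forall>Y \<in> carrier_mat m m. X + Y \<in> unitary_mat m \<and> X - Y \<in> unitary_mat m \<longrightarrow>
          (\<exists>W (H :: nat \<Rightarrow> complex mat).
             W \<in> unitary_mat q \<and>
             (\<forall>j<r. H j \<in> hermitian_mat (ms j) \<inter> unitary_mat (ms j)) \<and>
             Y = U * diag_block_mat ([0\<^sub>m p p, W] @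
                   map (\<lambda>j. (\<i> * complex_of_real (sqrt (1 - (s j)\<^sup>2))) \<cdot>\<^sub>m H j) [0..<r]) * V)))"
proof -
  from ex obtain Y where Y: "Y \<in> carrier_mat m m" and u1: "X + Y \<in> unitary_mat m"
    and u2: "X - Y \<in> unitary_mat m" by blast
  show ?thesis
  proof (intro conjI allI impI ballI)
    show "\<exists>U V (p::nat) (q::nat) (r::nat) (ms :: nat \<Rightarrow> nat) (s :: nat \<Rightarrow> real).
       U \<in> unitary_mat m \<and> V \<in> unitary_mat m \<and>
       (\<forall>j<r. ms j > 0) \<and> (\<forall>j<r. 0 < s j \<and> s j < 1) \<and>
       (\<forall>i j. i < j \<and> j < r \<longrightarrow> s j < s i) \<and>
       p + q + (\<Sum>j<r. ms j) = m \<and>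
       X = U * diag_block_mat ([1\<^sub>m p, 0\<^sub>m q q] @
              map (\<lambda>j. complex_of_real (s j) \<cdot>\<^sub>m 1\<^sub>m (ms j)) [0..<r]) * V"
      by (rule part1_stmt[OF X Y u1 u2])
  next
    fix U V p q r ms s Y'
    assume h: "U \<in> unitary_mat m \<and> V \<in> unitary_mat m \<and>
       (\<forall>j<r. ms j > 0) \<and> (\<forall>j<r. 0 < s j \<and> s j < 1) \<and>
       (\<forall>i j. i < j \<and> j < r \<longrightarrow> s j < s i) \<and>
       p + q + (\<Sum>j<r. ms j) = m \<and>
       X = U * diag_block_mat ([1\<^sub>m p, 0\<^sub>m q q] @
              map (\<lambda>j. complex_of_real (s j) \<cdot>\<^sub>m 1\<^sub>m (ms j)) [0..<r]) * V"
      and Y': "Y' \<in> carrier_mat m m"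
      and uu: "X + Y' \<in> unitary_mat m \<and> X - Y' \<in> unitary_mat m"
    show "\<exists>W (H :: nat \<Rightarrow> complex mat).
             W \<in> unitary_mat q \<and>
             (\<forall>j<r. H j \<in> hermitian_mat (ms j) \<inter> unitary_mat (ms j)) \<and>
             Y' = U * diag_block_mat ([0\<^sub>m p p, W] @
                   map (\<lambda>j. (\<i> * complex_of_real (sqrt (1 - (s j)\<^sup>2))) \<cdot>\<^sub>m H j) [0..<r]) * V"
      using part2_stmt[of U m V r s p q ms X Y'] h Y' uu by blast
  qed
qed

end
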